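(* There is a universal absolute constant $C>0$ such that the following holds. Consider any bandit algorithm, fix a round $t$ and parameters $\varepsilon,r>0$, and fix an arm $i$. Suppose that $\mathcal F_t$ almost surely contains at least $\varepsilon^{-2}$ samples of arm $i$. Let $\hat\mu_i$ be a posterior sample for $\mu_i$ at round $t$. Then $$\Pr\big[|\hat\mu_i-\mu_i|\geq r\varepsilon\big]\leq C e^{-r^2/C}\quad\text{and}\quad \Pr\big[|\mathbb E[\mu_i\mid\mathcal F_t]-\mu_i|\geq r\varepsilon\big]\leq C e^{-r^2/C}.$$ More generally, let $q=(q_1,\dots,q_K)$ be a probability distribution over the arms, let $\mu_q=\sum_i q_i\mu_i$ and $\hat\mu_q=\sum_i q_i\hat\mu_i$, where $(\hat\mu_1,\dots,\hat\mu_K)$ is a posterior sample of $(\mu_1,\dots,\mu_K)$ at round $t$. If $\mathcal F_t$ almost surely contains at least $\varepsilon^{-2}$ samples of each arm $i$ with $q_i\neq 0$, then the two displayed inequalities hold with $i$ replaced by $q$ (i.e. with $\hat\mu_q,\mu_q$ and $\mathbb E[\mu_q\mid\mathcal F_t]$).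
   Context: Setting (Bayesian multi-armed bandit with Bernoulli rewards): there are $K$ arms; each arm $i$ has a mean reward $\mu_i\in[0,1]$, and $\mu_1,\dots,\mu_K$ are drawn independently with $\mu_i\sim\mathcal P_i$ for known priors $\mathcal P_i$ on $[0,1]$. Given the mean rewards, each arm $i$ has an i.i.d. sequence of $\{0,1\}$-valued samples with mean $\mu_i$ (independent across arms); the $n$-th time arm $i$ is chosen, its $n$-th sample is observed as the reward. A bandit algorithm (possibly randomized) chooses in each round an arm based on the past chosen arms and observed rewards. $\mathcal F_t$ denotes the $\sigma$-algebra generated by the chosen arms and realized rewards in rounds before $t$. A posterior sample of a random quantity $X$ (a function of $\mu_1,\dots,\mu_K$) at round $t$ is a draw, independent of everything else given $\mathcal F_t$, from the conditional distribution of $X$ given $\mathcal F_t$. *)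

theory Defs
  imports "HOL-Probability.Probability"
begin

text \<open>Arms are natural numbers i < K; a mean-reward vector is mu :: nat => real
  (an element of the product space over {..<K}).  A history (the data generating
  the sigma-algebra F_t) is the list of (chosen arm, realized reward) of the rounds
  before round t; rounds are numbered 0,1,2,..., so before round t there are t entries.
  A (possibly randomized) algorithm is a policy mapping the past history to a
  distribution over the next arm.\<close>

type_synonym history = "(nat \<times> bool) list"

primrec hist_pmf :: "(history \<Rightarrow> nat pmf) \<Rightarrow> (nat \<Rightarrow> real) \<Rightarrow> nat \<Rightarrow> history pmf" where
  "hist_pmf pol mu 0 = return_pmf []"
| "hist_pmf pol mu (Suc n) =
     bind_pmf (hist_pmf pol mu n) (\<lambda>h.
       bind_pmf (pol h) (\<lambda>a.
         map_pmf (\<lambda>b. h @ [(a, b)]) (bernoulli_pmf (mu a))))"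

definition prior :: "nat \<Rightarrow> (nat \<Rightarrow> real measure) \<Rightarrow> (nat \<Rightarrow> real) measure" where
  "prior K P = PiM {..<K} P"

definition bandit_joint ::
  "nat \<Rightarrow> (nat \<Rightarrow> real measure) \<Rightarrow> (history \<Rightarrow> nat pmf) \<Rightarrow> nat \<Rightarrow> ((nat \<Rightarrow> real) \<times> history) measure" where
  "bandit_joint K P pol t =
     density (prior K P \<Otimes>\<^sub>M count_space UNIV)
       (\<lambda>(mu, h). ennreal (pmf (hist_pmf pol mu t) h))"

text \<open>The sigma-algebra F_t, generated by the history, as a sub-sigma-algebra of the joint law.\<close>
definition hist_algebra ::
  "nat \<Rightarrow> (nat \<Rightarrow> real measure) \<Rightarrow> (history \<Rightarrow> nat pmf) \<Rightarrow> nat \<Rightarrow> ((nat \<Rightarrow> real) \<times> history) measure" where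
  "hist_algebra K P pol t =
     vimage_algebra (space (bandit_joint K P pol t)) snd (count_space UNIV)"

definition evidence ::
  "nat \<Rightarrow> (nat \<Rightarrow> real measure) \<Rightarrow> (history \<Rightarrow> nat pmf) \<Rightarrow> nat \<Rightarrow> history \<Rightarrow> real" where
  "evidence K P pol t h = (\<integral>nu. pmf (hist_pmf pol nu t) h \<partial>prior K P)"

text \<open>Joint law of (mu, history, nu) where nu is a posterior sample of mu at round t:
  given the history h, nu is drawn independently of mu from the posterior
  (prior reweighted by the likelihood of h, by Bayes' rule).\<close>
definition bandit_post_model ::
  "nat \<Rightarrow> (nat \<Rightarrow> real measure) \<Rightarrow> (history \<Rightarrow> nat pmf) \<Rightarrow> nat \<Rightarrow>
   ((nat \<Rightarrow> real) \<times> history \<times> (nat \<Rightarrow> real)) measure" where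
  "bandit_post_model K P pol t =
     density (prior K P \<Otimes>\<^sub>M (count_space UNIV \<Otimes>\<^sub>M prior K P))
       (\<lambda>(mu, h, nu). ennreal (pmf (hist_pmf pol mu t) h * pmf (hist_pmf pol nu t) h
                                 / evidence K P pol t h))"

definition num_samples :: "history \<Rightarrow> nat \<Rightarrow> nat" where
  "num_samples h i = length (filter (\<lambda>x. fst x = i) h)"

end

theory Submission
  imports Defs
begin

definition succs :: "history \<Rightarrow> nat \<Rightarrow> nat" where
  "succs h i = length (filter (\<lambda>x. fst x = i \<and> snd x) h)"

definition Gf :: "real \<Rightarrow> nat \<Rightarrow> (nat \<Rightarrow> real) \<Rightarrow> history \<Rightarrow> real" where
  "Gf \<theta> i mu h = exp (\<theta> * (real (succs h i) - mu i * real (num_samples h i))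
                     - \<theta>\<^sup>2 * real (num_samples h i) / 8)"

lemma Gf_nonneg: "Gf \<theta> i mu h \<ge> 0" by (simp add: Gf_def)

lemma hoeff_bern_pos:
  fixes p h :: real assumes "0 \<le> p" "p \<le> 1" "h \<ge> 0"
  shows "p * exp (h * (1 - p)) + (1 - p) * exp (- h * p) \<le> exp (h\<^sup>2 / 8)"
proof -
  have pos: "1 + p * (exp h - 1) > 0"
    using assms by (smt (verit) exp_ge_zero mult_nonneg_nonneg one_le_exp_iff)
  have "-h * p + ln (1 + p * (exp h - 1)) \<le> h\<^sup>2 / 8"
    using Hoeffdings_lemma_aux[of h p] assms by simp
  hence "exp (-h * p + ln (1 + p * (exp h - 1))) \<le> exp (h\<^sup>2 / 8)" by simp
  also have "exp (-h * p + ln (1 + p * (exp h - 1))) = exp (-h*p) * (1 + p * (exp h - 1))"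
    using pos by (simp add: exp_diff exp_minus field_simps)
  also have "\<dots> = p * exp (h * (1 - p)) + (1 - p) * exp (- h * p)"
    by (simp add: algebra_simps exp_add[symmetric] exp_diff)
  finally show ?thesis by simp
qed

lemma hoeff_bern:
  fixes p h :: real assumes "0 \<le> p" "p \<le> 1"
  shows "p * exp (h * (1 - p)) + (1 - p) * exp (- h * p) \<le> exp (h\<^sup>2 / 8)"
proof (cases "h \<ge> 0")
  case True thus ?thesis using hoeff_bern_pos assms by blast
next
  case False
  have "(1-p) * exp ((-h) * (1 - (1-p))) + (1 - (1-p)) * exp (- (-h) * (1-p)) \<le> exp ((-h)\<^sup>2 / 8)"
    using hoeff_bern_pos[of "1-p" "-h"] assms False by simp
  thus ?thesis by (simp add: algebra_simps)
qed

lemma num_samples_snoc: "num_samples (h @ [(a,b)]) i = num_samples h i + (if a = i then 1 else 0)"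
  by (simp add: num_samples_def)
lemma succs_snoc: "succs (h @ [(a,b)]) i = succs h i + (if a = i \<and> b then 1 else 0)"
  by (simp add: succs_def)

lemma Gf_snoc: "Gf \<theta> i mu (h @ [(a,b)]) = Gf \<theta> i mu h *
   (if a = i then exp (\<theta> * ((if b then 1 else 0) - mu i) - \<theta>\<^sup>2 / 8) else 1)"
  by (auto simp: Gf_def num_samples_snoc succs_snoc exp_add[symmetric] algebra_simps diff_divide_distrib add_divide_distrib)

lemma bern_step:
  assumes "0 \<le> p" "p \<le> 1"
  shows "(\<integral>\<^sup>+b. ennreal (exp (\<theta> * ((if b then 1 else 0) - p) - \<theta>\<^sup>2 / 8)) \<partial>measure_pmf (bernoulli_pmf p)) \<le> 1"
proof -
  have "(\<integral>\<^sup>+b. ennreal (exp (\<theta> * ((if b then 1 else 0) - p) - \<theta>\<^sup>2 / 8)) \<partial>measure_pmf (bernoulli_pmf p))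
     = (\<Sum>b\<in>UNIV. ennreal (exp (\<theta> * ((if b then 1 else 0) - p) - \<theta>\<^sup>2 / 8)) * ennreal (pmf (bernoulli_pmf p) b))"
    by (subst nn_integral_measure_pmf_support[where A=UNIV]) auto
  also have "\<dots> = ennreal ((p * exp (\<theta> * (1 - p)) + (1 - p) * exp (- \<theta> * p)) / exp (\<theta>\<^sup>2 / 8))"
  proof -
    have "(\<Sum>b\<in>UNIV. ennreal (exp (\<theta> * ((if b then 1 else 0) - p) - \<theta>\<^sup>2 / 8)) * ennreal (pmf (bernoulli_pmf p) b))
        = (\<Sum>b\<in>UNIV. ennreal (exp (\<theta> * ((if b then 1 else 0) - p) - \<theta>\<^sup>2 / 8) * pmf (bernoulli_pmf p) b))"
      by (intro sum.cong refl) (simp add: ennreal_mult)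
    also have "\<dots> = ennreal (\<Sum>b\<in>UNIV. exp (\<theta> * ((if b then 1 else 0) - p) - \<theta>\<^sup>2 / 8) * pmf (bernoulli_pmf p) b)"
      by (rule sum_ennreal) simp
    also have "(\<Sum>b\<in>UNIV. exp (\<theta> * ((if b then 1 else 0) - p) - \<theta>\<^sup>2 / 8) * pmf (bernoulli_pmf p) b)
        = exp (\<theta> * (1 - p) - \<theta>\<^sup>2 / 8) * p + exp (\<theta> * (0 - p) - \<theta>\<^sup>2 / 8) * (1 - p)"
      using assms by (simp add: UNIV_bool)
    also have "\<dots> = (p * exp (\<theta> * (1 - p)) + (1 - p) * exp (- \<theta> * p)) / exp (\<theta>\<^sup>2 / 8)"
      by (simp only: exp_diff add_divide_distrib times_divide_eq_right times_divide_eq_left mult.commute diff_0 mult_minus_right mult_minus_left)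
    finally show ?thesis .
  qed
  also have "\<dots> \<le> 1"
    using hoeff_bern[OF assms, of \<theta>] by (simp add: divide_le_eq_1)
  finally show ?thesis .
qed

lemma SM:
  assumes "0 \<le> mu i" "mu i \<le> 1"
  shows "(\<integral>\<^sup>+h. ennreal (Gf \<theta> i mu h) \<partial>measure_pmf (hist_pmf pol mu n)) \<le> 1"
proof (induction n)
  case 0
  then show ?case by (simp add: Gf_def num_samples_def succs_def)
next
  case (Suc n)
  have step: "(\<integral>\<^sup>+a. \<integral>\<^sup>+b. ennreal (Gf \<theta> i mu (h @ [(a,b)])) \<partial>measure_pmf (bernoulli_pmf (mu a)) \<partial>measure_pmf (pol h))
        \<le> ennreal (Gf \<theta> i mu h)" for h
  proof -
    have "(\<integral>\<^sup>+b. ennreal (Gf \<theta> i mu (h @ [(a,b)])) \<partial>measure_pmf (bernoulli_pmf (mu a))) \<le> ennreal (Gf \<theta> i mu h)" for a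
    proof (cases "a = i")
      case True
      have "(\<integral>\<^sup>+b. ennreal (Gf \<theta> i mu (h @ [(a,b)])) \<partial>measure_pmf (bernoulli_pmf (mu a)))
          = ennreal (Gf \<theta> i mu h) * (\<integral>\<^sup>+b. ennreal (exp (\<theta> * ((if b then 1 else 0) - mu i) - \<theta>\<^sup>2 / 8)) \<partial>measure_pmf (bernoulli_pmf (mu i)))"
      proof -
        have "ennreal (Gf \<theta> i mu (h @ [(a,b)])) = ennreal (Gf \<theta> i mu h) * ennreal (exp (\<theta> * ((if b then 1 else 0) - mu i) - \<theta>\<^sup>2 / 8))" for b
          using True by (simp add: Gf_snoc ennreal_mult Gf_nonneg)
        thus ?thesis by (simp add: nn_integral_cmult True)
      qed
      also have "\<dots> \<le> ennreal (Gf \<theta> i mu h) * 1"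
        by (intro mult_left_mono bern_step assms) auto
      finally show ?thesis by simp
    next
      case False
      then show ?thesis by (simp add: Gf_snoc measure_pmf.emeasure_space_1)
    qed
    hence "(\<integral>\<^sup>+a. \<integral>\<^sup>+b. ennreal (Gf \<theta> i mu (h @ [(a,b)])) \<partial>measure_pmf (bernoulli_pmf (mu a)) \<partial>measure_pmf (pol h))
        \<le> (\<integral>\<^sup>+a. ennreal (Gf \<theta> i mu h) \<partial>measure_pmf (pol h))"
      by (intro nn_integral_mono) auto
    also have "\<dots> = ennreal (Gf \<theta> i mu h)" by (simp add: measure_pmf.emeasure_space_1)
    finally show ?thesis .
  qed
  have "(\<integral>\<^sup>+h. ennreal (Gf \<theta> i mu h) \<partial>measure_pmf (hist_pmf pol mu (Suc n)))
      = (\<integral>\<^sup>+h. \<integral>\<^sup>+a. \<integral>\<^sup>+b. ennreal (Gf \<theta> i mu (h @ [(a,b)])) \<partial>measure_pmf (bernoulli_pmf (mu a)) \<partial>measure_pmf (pol h) \<partial>measure_pmf (hist_pmf pol mu n))"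
    by simp
  also have "\<dots> \<le> (\<integral>\<^sup>+h. ennreal (Gf \<theta> i mu h) \<partial>measure_pmf (hist_pmf pol mu n))"
    by (intro nn_integral_mono step)
  also have "\<dots> \<le> 1" by (rule Suc)
  finally show ?case .
qed

lemma wsum_bound:
  fixes l e :: real
  shows "(\<Sum>k\<le>M. exp (l * (real k + 1) * e - 2 * (real k)\<^sup>2)) \<le> 6 * exp (2 * l\<^sup>2 * e\<^sup>2)"
proof -
  have t: "exp (l * (real k + 1) * e - 2 * (real k)\<^sup>2) \<le> exp 1 * exp (2 * l\<^sup>2 * e\<^sup>2) * exp (-1) ^ k" for k
  proof -
    have a: "l * e \<le> (l*e)\<^sup>2 + 1" using zero_le_power2[of "l*e - 1/2"] by (simp add: power2_eq_square algebra_simps)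
    have b: "l * real k * e \<le> (l*e)\<^sup>2 + (real k)\<^sup>2 / 4"
      using power2_diff[of "l*e" "real k / 2"] zero_le_power2[of "l*e - real k/2"]
      by (simp add: power2_eq_square field_simps)
    have c: "real k \<le> (real k)\<^sup>2"
      by (cases k) (auto simp: power2_eq_square)
    have d: "l * (real k + 1) * e = l*real k*e + l*e" by (simp add: algebra_simps)
    have "l * (real k + 1) * e - 2 * (real k)\<^sup>2 \<le> 1 + 2 * l\<^sup>2 * e\<^sup>2 + (- real k)"
      using a b c d unfolding power_mult_distrib by linarith
    hence "exp (l * (real k + 1) * e - 2 * (real k)\<^sup>2) \<le> exp (1 + 2 * l\<^sup>2 * e\<^sup>2 + (- real k))" by simp
    also have "\<dots> = exp 1 * exp (2 * l\<^sup>2 * e\<^sup>2) * exp (-1) ^ k"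
      by (simp add: exp_add[symmetric] exp_of_nat_mult[symmetric])
    finally show ?thesis .
  qed
  have "(\<Sum>k\<le>M. exp (l * (real k + 1) * e - 2 * (real k)\<^sup>2)) \<le> (\<Sum>k\<le>M. exp 1 * exp (2 * l\<^sup>2 * e\<^sup>2) * exp (-1) ^ k)"
    by (intro sum_mono t)
  also have "\<dots> = exp 1 * exp (2 * l\<^sup>2 * e\<^sup>2) * (\<Sum>k\<le>M. exp (-1) ^ k)"
    by (simp add: sum_distrib_left)
  also have "(\<Sum>k\<le>M. exp (-1::real) ^ k) \<le> 2"
  proof -
    have x: "exp (-1::real) \<le> 1/2"
    proof -
      have "2 \<le> exp (1::real)" using exp_ge_add_one_self[of 1] by simp
      thus ?thesis by (simp add: exp_minus field_simps)
    qed
    have "(\<Sum>k\<le>M. exp (-1::real) ^ k) \<le> (\<Sum>k\<le>M. (1/2::real) ^ k)"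
      by (intro sum_mono power_mono x) auto
    also have "\<dots> = 2 - 2 * (1/2) ^ (Suc M)"
      by (induction M) auto
    also have "\<dots> \<le> 2" by simp
    finally show ?thesis .
  qed
  hence "exp 1 * exp (2 * l\<^sup>2 * e\<^sup>2) * (\<Sum>k\<le>M. exp (-1::real) ^ k) \<le> exp 1 * exp (2 * l\<^sup>2 * e\<^sup>2) * 2"
    by (intro mult_left_mono) auto
  also have "\<dots> \<le> 3 * exp (2 * l\<^sup>2 * e\<^sup>2) * 2"
    using exp_le by (intro mult_right_mono) auto
  finally show ?thesis by simp
qed

lemma arm_pointwise:
  fixes e l mu :: real and S N :: nat
  assumes e: "e > 0" and l: "l \<ge> 0" and mu: "0 \<le> mu" "mu \<le> 1" and SN: "S \<le> N"
    and N: "real N \<ge> 1 / e\<^sup>2"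
  shows "exp (l * \<bar>real S / real N - mu\<bar>) \<le>
    (\<Sum>k\<le>nat \<lceil>1/e\<rceil>. exp (l * (real k + 1) * e - 2 * (real k)\<^sup>2) *
       (exp ((4 * real k * e) * (real S - mu * real N) - (4 * real k * e)\<^sup>2 * real N / 8) +
        exp ((- (4 * real k * e)) * (real S - mu * real N) - (- (4 * real k * e))\<^sup>2 * real N / 8)))"
    (is "_ \<le> (\<Sum>k\<le>_. ?w k * (?gp k + ?gm k))")
proof -
  define Y where "Y = real S / real N - mu"
  have Npos: "real N > 0" using N e by (smt (verit) divide_pos_pos zero_less_power of_nat_0 of_nat_le_0_iff)
  have Ne: "real N * e\<^sup>2 \<ge> 1" using N e by (simp add: field_simps)
  have SY: "real S - mu * real N = real N * Y" using Npos by (simp add: Y_def field_simps)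
  have emp: "0 \<le> real S / real N" "real S / real N \<le> 1" using SN Npos by auto
  have Yb: "\<bar>Y\<bar> \<le> 1" using emp mu unfolding Y_def by linarith
  define k where "k = nat \<lfloor>\<bar>Y\<bar> / e\<rfloor>"
  have k1: "real k * e \<le> \<bar>Y\<bar>"
  proof -
    have "real k = of_int \<lfloor>\<bar>Y\<bar> / e\<rfloor>" using k_def e by simp
    also have "\<dots> \<le> \<bar>Y\<bar> / e" by simp
    finally show ?thesis using e by (simp add: field_simps)
  qed
  have k2: "\<bar>Y\<bar> < (real k + 1) * e"
  proof -
    have "\<bar>Y\<bar> / e < of_int \<lfloor>\<bar>Y\<bar> / e\<rfloor> + 1" by linarith
    also have "of_int \<lfloor>\<bar>Y\<bar> / e\<rfloor> = real k" using k_def e by simp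
    finally show ?thesis using e by (simp add: field_simps)
  qed
  have kM: "k \<le> nat \<lceil>1/e\<rceil>"
  proof -
    have "\<bar>Y\<bar> / e \<le> 1 / e" using Yb e by (simp add: divide_right_mono)
    hence "\<lfloor>\<bar>Y\<bar> / e\<rfloor> \<le> \<lfloor>1/e\<rfloor>" by (rule floor_mono)
    also have "\<dots> \<le> \<lceil>1/e\<rceil>" by (rule floor_le_ceiling)
    finally have "\<lfloor>\<bar>Y\<bar> / e\<rfloor> \<le> \<lceil>1/e\<rceil>" .
    thus ?thesis using k_def by simp
  qed
  have key: "exp (2 * (real k)\<^sup>2) \<le> ?gp k + ?gm k"
  proof -
    have kk: "2 * (real k)\<^sup>2 \<le> 2 * (real k)\<^sup>2 * (real N * e\<^sup>2)"
      using Ne by (simp add: mult_le_cancel_left1)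
    show ?thesis
    proof (cases "Y \<ge> 0")
      case True
      have "2 * (real k)\<^sup>2 * (real N * e\<^sup>2) \<le> (4 * real k * e) * (real N * Y) - (4 * real k * e)\<^sup>2 * real N / 8"
      proof -
        have "real k * e * (real k * e) \<le> real k * e * Y" using k1 True e
          by (intro mult_left_mono) (auto simp: abs_of_nonneg)
        hence "4 * (real N) * (real k * e * (real k * e)) \<le> 4 * (real N) * (real k * e * Y)"
          by (rule mult_left_mono) (use Npos in auto)
        thus ?thesis by (simp add: power2_eq_square algebra_simps)
      qed
      hence "exp (2 * (real k)\<^sup>2) \<le> ?gp k" using kk SY by simp
      thus ?thesis by (smt (verit) exp_gt_zero)
    next
      case False
      have "2 * (real k)\<^sup>2 * (real N * e\<^sup>2) \<le> (- (4 * real k * e)) * (real N * Y) - (- (4 * real k * e))\<^sup>2 * real N / 8"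
      proof -
        have "real k * e * (real k * e) \<le> real k * e * (-Y)" using k1 False e
          by (intro mult_left_mono) (auto simp: abs_of_neg)
        hence "4 * (real N) * (real k * e * (real k * e)) \<le> 4 * (real N) * (real k * e * (-Y))"
          by (rule mult_left_mono) (use Npos in auto)
        thus ?thesis by (simp add: power2_eq_square algebra_simps)
      qed
      hence "exp (2 * (real k)\<^sup>2) \<le> ?gm k" using kk SY by simp
      thus ?thesis by (smt (verit) exp_gt_zero)
    qed
  qed
  have "exp (l * \<bar>Y\<bar>) \<le> exp (l * (real k + 1) * e)"
    using k2 l by (simp add: mult_left_mono mult.assoc)
  also have "\<dots> = ?w k * exp (2 * (real k)\<^sup>2)"
    by (simp add: exp_diff)
  also have "\<dots> \<le> ?w k * (?gp k + ?gm k)"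
    by (intro mult_left_mono key) auto
  also have "\<dots> \<le> (\<Sum>k\<le>nat \<lceil>1/e\<rceil>. ?w k * (?gp k + ?gm k))"
    by (rule member_le_sum[where f="\<lambda>k. ?w k * (?gp k + ?gm k)"]) (use kM in auto)
  finally show ?thesis by (simp add: Y_def)
qed

lemma exp_convex_comb:
  fixes q x :: "nat \<Rightarrow> real" and l :: real
  assumes l: "l \<ge> 0" and q: "\<And>i. i < K \<Longrightarrow> q i \<ge> 0" and qs: "(\<Sum>i<K. q i) = 1"
  shows "exp (l * \<bar>\<Sum>i<K. q i * x i\<bar>) \<le> (\<Sum>i<K. q i * exp (l * \<bar>x i\<bar>))"
proof -
  have K: "{..<K} \<noteq> {}" using qs by auto
  have "\<bar>\<Sum>i<K. q i * x i\<bar> \<le> (\<Sum>i<K. q i * \<bar>x i\<bar>)"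
  proof -
    have "\<bar>\<Sum>i<K. q i * x i\<bar> \<le> (\<Sum>i<K. \<bar>q i * x i\<bar>)" by (rule sum_abs)
    also have "\<dots> = (\<Sum>i<K. q i * \<bar>x i\<bar>)"
      using q by (intro sum.cong refl) (simp add: abs_mult)
    finally show ?thesis .
  qed
  hence "l * \<bar>\<Sum>i<K. q i * x i\<bar> \<le> l * (\<Sum>i<K. q i * \<bar>x i\<bar>)"
    using l by (rule mult_left_mono)
  also have "\<dots> = (\<Sum>i<K. q i *\<^sub>R (l * \<bar>x i\<bar>))"
    by (simp add: sum_distrib_left algebra_simps)
  finally have "exp (l * \<bar>\<Sum>i<K. q i * x i\<bar>) \<le> exp (\<Sum>i<K. q i *\<^sub>R (l * \<bar>x i\<bar>))"
    by simp
  also have "\<dots> \<le> (\<Sum>i<K. q i * exp (l * \<bar>x i\<bar>))"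
    by (rule convex_on_sum[OF _ K exp_convex qs]) (use q in auto)
  finally show ?thesis .
qed

definition emp :: "history \<Rightarrow> nat \<Rightarrow> real" where
  "emp h i = real (succs h i) / real (num_samples h i)"

definition good :: "nat \<Rightarrow> (nat \<Rightarrow> real) \<Rightarrow> real \<Rightarrow> history \<Rightarrow> bool" where
  "good K q e h \<longleftrightarrow> (\<forall>i<K. q i \<noteq> 0 \<longrightarrow> real (num_samples h i) \<ge> 1 / e\<^sup>2)"

definition Phi :: "real \<Rightarrow> real \<Rightarrow> nat \<Rightarrow> (nat \<Rightarrow> real) \<Rightarrow> history \<Rightarrow> real" where
  "Phi e l i mu h = (\<Sum>k\<le>nat \<lceil>1/e\<rceil>. exp (l * (real k + 1) * e - 2 * (real k)\<^sup>2) *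
       (Gf (4 * real k * e) i mu h + Gf (- (4 * real k * e)) i mu h))"

lemma succs_le: "succs h i \<le> num_samples h i"
  unfolding succs_def num_samples_def by (induction h) auto

lemma Phi_nonneg: "Phi e l i mu h \<ge> 0"
  unfolding Phi_def by (intro sum_nonneg mult_nonneg_nonneg add_nonneg_nonneg Gf_nonneg) auto

lemma arm_Phi:
  assumes "e > 0" "l \<ge> 0" "0 \<le> mu i" "mu i \<le> 1" "real (num_samples h i) \<ge> 1 / e\<^sup>2"
  shows "exp (l * \<bar>emp h i - mu i\<bar>) \<le> Phi e l i mu h"
  using arm_pointwise[OF assms(1,2,3,4) succs_le assms(5)]
  unfolding Phi_def Gf_def emp_def by simp

lemma Phi_int:
  assumes "e > 0" "0 \<le> mu i" "mu i \<le> 1"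
  shows "(\<integral>\<^sup>+h. ennreal (Phi e l i mu h) \<partial>measure_pmf (hist_pmf pol mu n)) \<le> ennreal (12 * exp (2 * l\<^sup>2 * e\<^sup>2))"
proof -
  let ?w = "\<lambda>k::nat. exp (l * (real k + 1) * e - 2 * (real k)\<^sup>2)"
  have "(\<integral>\<^sup>+h. ennreal (Phi e l i mu h) \<partial>measure_pmf (hist_pmf pol mu n))
     = (\<integral>\<^sup>+h. (\<Sum>k\<le>nat \<lceil>1/e\<rceil>. ennreal (?w k * (Gf (4 * real k * e) i mu h + Gf (- (4 * real k * e)) i mu h))) \<partial>measure_pmf (hist_pmf pol mu n))"
    unfolding Phi_def
    by (intro nn_integral_cong) (simp add: Gf_nonneg add_nonneg_nonneg)
  also have "\<dots> = (\<Sum>k\<le>nat \<lceil>1/e\<rceil>. (\<integral>\<^sup>+h. ennreal (?w k * (Gf (4 * real k * e) i mu h + Gf (- (4 * real k * e)) i mu h)) \<partial>measure_pmf (hist_pmf pol mu n)))"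
    by (simp add: nn_integral_sum)
  also have "\<dots> = (\<Sum>k\<le>nat \<lceil>1/e\<rceil>. ennreal (?w k) * ((\<integral>\<^sup>+h. ennreal (Gf (4 * real k * e) i mu h) \<partial>measure_pmf (hist_pmf pol mu n))
                  + (\<integral>\<^sup>+h. ennreal (Gf (- (4 * real k * e)) i mu h) \<partial>measure_pmf (hist_pmf pol mu n))))"
    by (intro sum.cong refl)
       (simp add: ennreal_mult Gf_nonneg add_nonneg_nonneg nn_integral_cmult nn_integral_add measurable_def)
  also have "\<dots> \<le> (\<Sum>k\<le>nat \<lceil>1/e\<rceil>. ennreal (?w k) * (1 + 1))"
    by (intro sum_mono mult_left_mono add_mono SM assms) auto
  also have "\<dots> = (\<Sum>k\<le>nat \<lceil>1/e\<rceil>. ennreal (2 * ?w k))"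
    by (intro sum.cong refl) (simp add: ennreal_mult mult.commute)
  also have "\<dots> = ennreal (2 * (\<Sum>k\<le>nat \<lceil>1/e\<rceil>. ?w k))"
    by (simp add: sum_distrib_left)
  also have "\<dots> \<le> ennreal (12 * exp (2 * l\<^sup>2 * e\<^sup>2))"
    using wsum_bound[of l e "nat \<lceil>1/e\<rceil>"] by (intro ennreal_leI) simp
  finally show ?thesis .
qed

lemma core_mu:
  assumes e: "e > 0" and l: "l \<ge> 0" and mu: "\<And>i. i < K \<Longrightarrow> 0 \<le> mu i \<and> mu i \<le> 1"
    and q: "\<And>i. i < K \<Longrightarrow> q i \<ge> 0" and qs: "(\<Sum>i<K. q i) = 1"
  shows "(\<integral>\<^sup>+h. ennreal (if good K q e h then exp (l * \<bar>(\<Sum>i<K. q i * mu i) - (\<Sum>i<K. q i * emp h i)\<bar>) else 0)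
            \<partial>measure_pmf (hist_pmf pol mu n)) \<le> ennreal (12 * exp (2 * l\<^sup>2 * e\<^sup>2))"
proof -
  have pw: "(if good K q e h then exp (l * \<bar>(\<Sum>i<K. q i * mu i) - (\<Sum>i<K. q i * emp h i)\<bar>) else 0)
          \<le> (\<Sum>i<K. q i * Phi e l i mu h)" for h
  proof (cases "good K q e h")
    case True
    have "(\<Sum>i<K. q i * mu i) - (\<Sum>i<K. q i * emp h i) = - (\<Sum>i<K. q i * (emp h i - mu i))"
      by (simp add: sum_subtractf[symmetric] sum_negf[symmetric] algebra_simps)
    hence "exp (l * \<bar>(\<Sum>i<K. q i * mu i) - (\<Sum>i<K. q i * emp h i)\<bar>) = exp (l * \<bar>\<Sum>i<K. q i * (emp h i - mu i)\<bar>)"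
      by simp
    also have "\<dots> \<le> (\<Sum>i<K. q i * exp (l * \<bar>emp h i - mu i\<bar>))"
      by (rule exp_convex_comb[OF l q qs])
    also have "\<dots> \<le> (\<Sum>i<K. q i * Phi e l i mu h)"
    proof (intro sum_mono)
      fix i assume i: "i \<in> {..<K}"
      show "q i * exp (l * \<bar>emp h i - mu i\<bar>) \<le> q i * Phi e l i mu h"
      proof (cases "q i = 0")
        case False
        hence "real (num_samples h i) \<ge> 1 / e\<^sup>2" using True i unfolding good_def by auto
        thus ?thesis using arm_Phi[OF e l] mu[of i] q[of i] i by (intro mult_left_mono) auto
      qed simp
    qed
    finally show ?thesis using True by simp
  next
    case False
    then show ?thesis using q by (auto intro!: sum_nonneg mult_nonneg_nonneg Phi_nonneg)
  qed
  have "(\<integral>\<^sup>+h. ennreal (if good K q e h then exp (l * \<bar>(\<Sum>i<K. q i * mu i) - (\<Sum>i<K. q i * emp h i)\<bar>) else 0)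
            \<partial>measure_pmf (hist_pmf pol mu n)) \<le> (\<integral>\<^sup>+h. (\<Sum>i<K. ennreal (q i) * ennreal (Phi e l i mu h)) \<partial>measure_pmf (hist_pmf pol mu n))"
  proof (intro nn_integral_mono)
    fix h
    have "(\<Sum>i<K. ennreal (q i) * ennreal (Phi e l i mu h)) = (\<Sum>i<K. ennreal (q i * Phi e l i mu h))"
      using q by (intro sum.cong refl) (simp add: ennreal_mult Phi_nonneg)
    also have "\<dots> = ennreal (\<Sum>i<K. q i * Phi e l i mu h)"
      using q by (intro sum_ennreal) (simp add: Phi_nonneg)
    finally have eq: "(\<Sum>i<K. ennreal (q i) * ennreal (Phi e l i mu h)) = ennreal (\<Sum>i<K. q i * Phi e l i mu h)" .
    show "ennreal (if good K q e h then exp (l * \<bar>(\<Sum>i<K. q i * mu i) - (\<Sum>i<K. q i * emp h i)\<bar>) else 0)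
          \<le> (\<Sum>i<K. ennreal (q i) * ennreal (Phi e l i mu h))"
      unfolding eq by (rule ennreal_leI[OF pw])
  qed
  also have "\<dots> = (\<Sum>i<K. ennreal (q i) * (\<integral>\<^sup>+h. ennreal (Phi e l i mu h) \<partial>measure_pmf (hist_pmf pol mu n)))"
    by (simp add: nn_integral_sum nn_integral_cmult)
  also have "\<dots> \<le> (\<Sum>i<K. ennreal (q i) * ennreal (12 * exp (2 * l\<^sup>2 * e\<^sup>2)))"
    by (intro sum_mono mult_left_mono Phi_int e) (use mu in auto)
  also have "\<dots> = ennreal (12 * exp (2 * l\<^sup>2 * e\<^sup>2))"
  proof -
    have "(\<Sum>i<K. ennreal (q i) * ennreal (12 * exp (2 * l\<^sup>2 * e\<^sup>2))) = (\<Sum>i<K. ennreal (q i * (12 * exp (2 * l\<^sup>2 * e\<^sup>2))))"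
      using q by (intro sum.cong refl) (simp add: ennreal_mult)
    also have "\<dots> = ennreal (\<Sum>i<K. q i * (12 * exp (2 * l\<^sup>2 * e\<^sup>2)))"
      using q by (intro sum_ennreal) simp
    also have "\<dots> = ennreal (12 * exp (2 * l\<^sup>2 * e\<^sup>2))"
      by (simp add: sum_distrib_right[symmetric] qs)
    finally show ?thesis .
  qed
  finally show ?thesis .
qed

definition Hs :: "nat \<Rightarrow> nat \<Rightarrow> history set" where
  "Hs K n = {h. set h \<subseteq> {..<K} \<times> UNIV \<and> length h = n}"

lemma finite_Hs: "finite (Hs K n)"
  unfolding Hs_def by (rule finite_lists_length_eq) auto

locale bsetup =
  fixes K :: nat and P :: "nat \<Rightarrow> real measure" and pol :: "history \<Rightarrow> nat pmf"
  assumes P_ok: "\<And>i. i < K \<Longrightarrow> prob_space (P i) \<and> sets (P i) = sets borel \<and> measure (P i) {0..1} = 1"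
  and pol_ok: "\<And>h. set_pmf (pol h) \<subseteq> {..<K}"
begin

lemma set_hist: "set_pmf (hist_pmf pol mu n) \<subseteq> Hs K n"
proof (induction n)
  case 0 thus ?case by (simp add: Hs_def)
next
  case (Suc n)
  show ?case
  proof
    fix h assume "h \<in> set_pmf (hist_pmf pol mu (Suc n))"
    then obtain h' a b where h': "h' \<in> set_pmf (hist_pmf pol mu n)" and a: "a \<in> set_pmf (pol h')"
      and h: "h = h' @ [(a,b)]" by auto
    show "h \<in> Hs K (Suc n)" using Suc h' a pol_ok[of h'] h by (auto simp: Hs_def)
  qed
qed

lemma pmf_hist_zero: "h \<notin> Hs K n \<Longrightarrow> pmf (hist_pmf pol mu n) h = 0"
  using set_hist[of mu n] by (auto simp: set_pmf_iff)

lemma prob_prior: "prob_space (prior K P)"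
  unfolding prior_def by (rule prob_space_PiM) (use P_ok in auto)

lemma meas_comp: "a < K \<Longrightarrow> (\<lambda>mu. mu a) \<in> borel_measurable (prior K P)"
proof -
  assume a: "a < K"
  have "(\<lambda>mu. mu a) \<in> measurable (prior K P) (P a)"
    unfolding prior_def by (rule measurable_component_singleton) (use a in auto)
  moreover have "measurable (prior K P) (P a) = measurable (prior K P) borel"
    by (rule measurable_cong_sets) (use P_ok[OF a] in auto)
  ultimately show ?thesis by simp
qed

lemma meas_bern: "a < K \<Longrightarrow> (\<lambda>mu. pmf (bernoulli_pmf (mu a)) b) \<in> borel_measurable (prior K P)"
proof -
  assume a: "a < K"
  have eq: "(\<lambda>mu. pmf (bernoulli_pmf (mu a)) b) = (\<lambda>mu. if b then min 1 (max 0 (mu a)) else 1 - min 1 (max 0 (mu a)))"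
    by (auto simp: bernoulli_pmf.rep_eq)
  show ?thesis unfolding eq using meas_comp[OF a] by measurable
qed

lemma meas_L: "(\<lambda>mu. pmf (hist_pmf pol mu n) h) \<in> borel_measurable (prior K P)"
proof (induction n arbitrary: h)
  case 0 thus ?case by simp
next
  case (Suc n)
  have eq: "pmf (hist_pmf pol mu (Suc n)) h =
      (\<Sum>x\<in>Hs K n. (\<Sum>a\<in>{..<K}. (\<Sum>b\<in>{b. x @ [(a,b)] = h}. pmf (bernoulli_pmf (mu a)) b) * pmf (pol x) a) * pmf (hist_pmf pol mu n) x)" for mu
  proof -
    have "pmf (hist_pmf pol mu (Suc n)) h = (\<Sum>x\<in>Hs K n. pmf (bind_pmf (pol x) (\<lambda>a. map_pmf (\<lambda>b. x @ [(a, b)]) (bernoulli_pmf (mu a)))) h * pmf (hist_pmf pol mu n) x)"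
      by (simp add: pmf_bind, rule integral_measure_pmf_real[OF finite_Hs]) (use set_hist in auto)
    also have "\<dots> = (\<Sum>x\<in>Hs K n. (\<Sum>a\<in>{..<K}. pmf (map_pmf (\<lambda>b. x @ [(a, b)]) (bernoulli_pmf (mu a))) h * pmf (pol x) a) * pmf (hist_pmf pol mu n) x)"
    proof (intro sum.cong refl arg_cong2[where f="(*)"])
      fix x
      show "pmf (bind_pmf (pol x) (\<lambda>a. map_pmf (\<lambda>b. x @ [(a, b)]) (bernoulli_pmf (mu a)))) h =
            (\<Sum>a\<in>{..<K}. pmf (map_pmf (\<lambda>b. x @ [(a, b)]) (bernoulli_pmf (mu a))) h * pmf (pol x) a)"
        by (simp add: pmf_bind, rule integral_measure_pmf_real) (use pol_ok in auto)
    qed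
    also have "\<dots> = (\<Sum>x\<in>Hs K n. (\<Sum>a\<in>{..<K}. (\<Sum>b\<in>{b. x @ [(a,b)] = h}. pmf (bernoulli_pmf (mu a)) b) * pmf (pol x) a) * pmf (hist_pmf pol mu n) x)"
      by (intro sum.cong refl arg_cong2[where f="(*)"])
         (simp add: pmf_map measure_measure_pmf_finite vimage_def)
    finally show ?thesis .
  qed
  show ?case unfolding eq
    by (intro borel_measurable_sum borel_measurable_times borel_measurable_const Suc meas_bern) auto
qed

lemma meas_L_pair: "(\<lambda>\<omega>. pmf (hist_pmf pol (fst \<omega>) n) (snd \<omega>)) \<in> borel_measurable (prior K P \<Otimes>\<^sub>M count_space UNIV)"
  by (rule measurable_compose_countable'[where f="\<lambda>h \<omega>. pmf (hist_pmf pol (fst \<omega>) n) h" and g=snd and I=UNIV])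
     (auto intro: measurable_compose[OF measurable_fst meas_L])

lemma nonneg_ev: "evidence K P pol n h \<ge> 0"
  unfolding evidence_def by (rule integral_nonneg_AE) auto

lemma integrable_L: "integrable (prior K P) (\<lambda>mu. pmf (hist_pmf pol mu n) h)"
proof -
  interpret prob_space "prior K P" by (rule prob_prior)
  show ?thesis by (rule integrable_const_bound[where B=1]) (auto simp: pmf_le_1 meas_L)
qed

lemma nn_L: "(\<integral>\<^sup>+mu. ennreal (pmf (hist_pmf pol mu n) h) \<partial>prior K P) = ennreal (evidence K P pol n h)"
  unfolding evidence_def by (rule nn_integral_eq_integral[OF integrable_L]) auto

lemma count_to_sum:
  assumes "\<And>h. h \<notin> Hs K n \<Longrightarrow> f h = 0"
  shows "(\<integral>\<^sup>+h. f h \<partial>count_space UNIV) = (\<Sum>h\<in>Hs K n. f h)"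
proof -
  have "(\<integral>\<^sup>+h. f h \<partial>count_space UNIV) = (\<integral>\<^sup>+h. f h * indicator (Hs K n) h \<partial>count_space UNIV)"
    using assms by (intro nn_integral_cong) (auto split: split_indicator)
  also have "\<dots> = (\<integral>\<^sup>+h. f h \<partial>count_space (Hs K n))"
    by (rule nn_integral_count_space_indicator[symmetric]) simp
  also have "\<dots> = (\<Sum>h\<in>Hs K n. f h)" by (rule nn_integral_count_space_finite[OF finite_Hs])
  finally show ?thesis .
qed

lemma joint_nn:
  assumes g: "g \<in> borel_measurable (prior K P \<Otimes>\<^sub>M count_space UNIV)"
  shows "(\<integral>\<^sup>+\<omega>. g \<omega> \<partial>bandit_joint K P pol n) =
         (\<integral>\<^sup>+mu. (\<integral>\<^sup>+h. g (mu, h) \<partial>measure_pmf (hist_pmf pol mu n)) \<partial>prior K P)"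
proof -
  interpret C: sigma_finite_measure "count_space (UNIV :: history set)"
    by (rule sigma_finite_measure_count_space)
  have d: "(\<lambda>(mu, h). ennreal (pmf (hist_pmf pol mu n) h)) \<in> borel_measurable (prior K P \<Otimes>\<^sub>M count_space UNIV)"
    using meas_L_pair[of n] by (simp add: case_prod_beta')
  have "(\<integral>\<^sup>+\<omega>. g \<omega> \<partial>bandit_joint K P pol n) =
        (\<integral>\<^sup>+\<omega>. (\<lambda>(mu, h). ennreal (pmf (hist_pmf pol mu n) h)) \<omega> * g \<omega> \<partial>(prior K P \<Otimes>\<^sub>M count_space UNIV))"
    unfolding bandit_joint_def by (rule nn_integral_density[OF d g])
  also have "\<dots> = (\<integral>\<^sup>+mu. \<integral>\<^sup>+h. ennreal (pmf (hist_pmf pol mu n) h) * g (mu, h) \<partial>count_space UNIV \<partial>prior K P)"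
    by (rule C.nn_integral_fst[symmetric, where f="\<lambda>\<omega>. (\<lambda>(mu, h). ennreal (pmf (hist_pmf pol mu n) h)) \<omega> * g \<omega>", simplified])
       (use d g in measurable)
  also have "\<dots> = (\<integral>\<^sup>+mu. (\<integral>\<^sup>+h. g (mu, h) \<partial>measure_pmf (hist_pmf pol mu n)) \<partial>prior K P)"
    by (simp add: nn_integral_measure_pmf)
  finally show ?thesis .
qed

end

context bsetup
begin

abbreviation "L mu h n \<equiv> pmf (hist_pmf pol mu n) h"

lemma meas_w:
  "(\<lambda>\<omega>. ennreal (pmf (hist_pmf pol (fst \<omega>) n) (fst (snd \<omega>)) * pmf (hist_pmf pol (snd (snd \<omega>)) n) (fst (snd \<omega>))
        / evidence K P pol n (fst (snd \<omega>))))
   \<in> borel_measurable (prior K P \<Otimes>\<^sub>M (count_space UNIV \<Otimes>\<^sub>M prior K P))"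
proof (rule measurable_compose_countable'[where g="\<lambda>\<omega>. fst (snd \<omega>)" and I=UNIV and
      f="\<lambda>h \<omega>. ennreal (pmf (hist_pmf pol (fst \<omega>) n) h * pmf (hist_pmf pol (snd (snd \<omega>)) n) h / evidence K P pol n h)"])
  fix h :: history
  have [measurable]: "(\<lambda>mu. pmf (hist_pmf pol mu n) h) \<in> borel_measurable (prior K P)" by (rule meas_L)
  show "(\<lambda>\<omega>. ennreal (pmf (hist_pmf pol (fst \<omega>) n) h * pmf (hist_pmf pol (snd (snd \<omega>)) n) h / evidence K P pol n h))
        \<in> borel_measurable (prior K P \<Otimes>\<^sub>M (count_space UNIV \<Otimes>\<^sub>M prior K P))"
    by measurable
qed auto

lemma post_nn:
  assumes g: "g \<in> borel_measurable (prior K P \<Otimes>\<^sub>M (count_space UNIV \<Otimes>\<^sub>M prior K P))"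
  shows "(\<integral>\<^sup>+\<omega>. g \<omega> \<partial>bandit_post_model K P pol n) =
    (\<integral>\<^sup>+mu. \<integral>\<^sup>+h. \<integral>\<^sup>+nu. ennreal (L mu h n * L nu h n / evidence K P pol n h) * g (mu, h, nu)
        \<partial>prior K P \<partial>count_space UNIV \<partial>prior K P)"
proof -
  interpret C: sigma_finite_measure "count_space (UNIV :: history set)"
    by (rule sigma_finite_measure_count_space)
  interpret Pr: prob_space "prior K P" by (rule prob_prior)
  interpret CP: sigma_finite_measure "count_space (UNIV :: history set) \<Otimes>\<^sub>M prior K P"
    by (rule sigma_finite_pair_measure) (rule C.sigma_finite_measure_axioms, rule Pr.sigma_finite_measure_axioms)
  define w where "w = (\<lambda>\<omega>::((nat \<Rightarrow> real) \<times> history \<times> (nat \<Rightarrow> real)). ennreal (pmf (hist_pmf pol (fst \<omega>) n) (fst (snd \<omega>)) * pmf (hist_pmf pol (snd (snd \<omega>)) n) (fst (snd \<omega>))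
        / evidence K P pol n (fst (snd \<omega>))))"
  have wm[measurable]: "w \<in> borel_measurable (prior K P \<Otimes>\<^sub>M (count_space UNIV \<Otimes>\<^sub>M prior K P))"
    unfolding w_def by (rule meas_w)
  have dens: "(\<lambda>(mu, h, nu). ennreal (pmf (hist_pmf pol mu n) h * pmf (hist_pmf pol nu n) h / evidence K P pol n h)) = w"
    by (auto simp: w_def fun_eq_iff)
  have "(\<integral>\<^sup>+\<omega>. g \<omega> \<partial>bandit_post_model K P pol n) = (\<integral>\<^sup>+\<omega>. w \<omega> * g \<omega> \<partial>(prior K P \<Otimes>\<^sub>M (count_space UNIV \<Otimes>\<^sub>M prior K P)))"
    unfolding bandit_post_model_def dens by (rule nn_integral_density[OF wm g])
  also have "\<dots> = (\<integral>\<^sup>+mu. \<integral>\<^sup>+y. w (mu, y) * g (mu, y) \<partial>(count_space UNIV \<Otimes>\<^sub>M prior K P) \<partial>prior K P)"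
    by (rule CP.nn_integral_fst[symmetric, where f="\<lambda>\<omega>. w \<omega> * g \<omega>", simplified]) (use g in measurable)
  also have "\<dots> = (\<integral>\<^sup>+mu. \<integral>\<^sup>+h. \<integral>\<^sup>+nu. w (mu, h, nu) * g (mu, h, nu) \<partial>prior K P \<partial>count_space UNIV \<partial>prior K P)"
  proof (rule nn_integral_cong)
    fix mu assume mu: "mu \<in> space (prior K P)"
    have m: "(\<lambda>y. w (mu, y) * g (mu, y)) \<in> borel_measurable (count_space UNIV \<Otimes>\<^sub>M prior K P)"
      using measurable_Pair1'[OF mu, of "count_space UNIV \<Otimes>\<^sub>M prior K P"] g wm by measurable
    show "(\<integral>\<^sup>+y. w (mu, y) * g (mu, y) \<partial>(count_space UNIV \<Otimes>\<^sub>M prior K P)) =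
          (\<integral>\<^sup>+h. \<integral>\<^sup>+nu. w (mu, h, nu) * g (mu, h, nu) \<partial>prior K P \<partial>count_space UNIV)"
      using Pr.nn_integral_fst[OF m] by simp
  qed
  finally show ?thesis by (simp add: w_def)
qed

lemma nn_integral_pmf_count:
  "(\<integral>\<^sup>+h. g h \<partial>measure_pmf (hist_pmf pol mu n)) = (\<Sum>h\<in>Hs K n. ennreal (L mu h n) * g h)"
  by (simp add: nn_integral_measure_pmf, rule count_to_sum) (simp add: pmf_hist_zero)

lemma transfer_mu:
  assumes g[measurable]: "g \<in> borel_measurable (prior K P \<Otimes>\<^sub>M count_space UNIV)"
  shows "(\<integral>\<^sup>+\<omega>. g (fst \<omega>, fst (snd \<omega>)) \<partial>bandit_post_model K P pol n) \<le> (\<integral>\<^sup>+\<omega>. g \<omega> \<partial>bandit_joint K P pol n)"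
proof -
  have "(\<integral>\<^sup>+\<omega>. g (fst \<omega>, fst (snd \<omega>)) \<partial>bandit_post_model K P pol n) =
    (\<integral>\<^sup>+mu. \<integral>\<^sup>+h. \<integral>\<^sup>+nu. ennreal (L mu h n * L nu h n / evidence K P pol n h) * g (mu, h)
        \<partial>prior K P \<partial>count_space UNIV \<partial>prior K P)"
    by (subst post_nn) (auto simp: measurable_compose[OF _ g])
  also have "\<dots> \<le> (\<integral>\<^sup>+mu. \<integral>\<^sup>+h. ennreal (L mu h n) * g (mu, h) \<partial>count_space UNIV \<partial>prior K P)"
  proof (intro nn_integral_mono)
    fix mu h
    have "(\<integral>\<^sup>+nu. ennreal (L mu h n * L nu h n / evidence K P pol n h) * g (mu, h) \<partial>prior K P)
        = (\<integral>\<^sup>+nu. ennreal (L nu h n) * (ennreal (L mu h n / evidence K P pol n h) * g (mu, h)) \<partial>prior K P)"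
    proof (intro nn_integral_cong)
      fix x
      have "ennreal (L mu h n * L x h n / evidence K P pol n h) = ennreal (L x h n) * ennreal (L mu h n / evidence K P pol n h)"
        by (subst ennreal_mult[symmetric]) (auto simp: nonneg_ev divide_nonneg_nonneg)
      then show "ennreal (L mu h n * L x h n / evidence K P pol n h) * g (mu, h) =
         ennreal (L x h n) * (ennreal (L mu h n / evidence K P pol n h) * g (mu, h))"
        by (simp add: mult.assoc)
    qed
    also have "\<dots> = (\<integral>\<^sup>+nu. ennreal (L nu h n) \<partial>prior K P) * (ennreal (L mu h n / evidence K P pol n h) * g (mu, h))"
      by (rule nn_integral_multc) (simp add: meas_L)
    also have "\<dots> = ennreal (evidence K P pol n h) * ennreal (L mu h n / evidence K P pol n h) * g (mu, h)"
      by (simp add: nn_L mult.assoc)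
    also have "\<dots> = ennreal (evidence K P pol n h * (L mu h n / evidence K P pol n h)) * g (mu, h)"
      by (simp only: ennreal_mult[OF nonneg_ev divide_nonneg_nonneg[OF pmf_nonneg nonneg_ev]])
    also have "\<dots> \<le> ennreal (L mu h n) * g (mu, h)"
      by (intro mult_right_mono ennreal_leI) auto
    finally show "(\<integral>\<^sup>+nu. ennreal (L mu h n * L nu h n / evidence K P pol n h) * g (mu, h) \<partial>prior K P)
        \<le> ennreal (L mu h n) * g (mu, h)" .
  qed
  also have "\<dots> = (\<integral>\<^sup>+\<omega>. g \<omega> \<partial>bandit_joint K P pol n)"
    by (simp add: joint_nn[OF g] nn_integral_measure_pmf)
  finally show ?thesis .
qed

lemma transfer_nu:
  assumes g[measurable]: "g \<in> borel_measurable (prior K P \<Otimes>\<^sub>M count_space UNIV)"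
  shows "(\<integral>\<^sup>+\<omega>. g (snd (snd \<omega>), fst (snd \<omega>)) \<partial>bandit_post_model K P pol n) \<le> (\<integral>\<^sup>+\<omega>. g \<omega> \<partial>bandit_joint K P pol n)"
proof -
  define A where "A = (\<lambda>h. \<integral>\<^sup>+nu. ennreal (L nu h n) * g (nu, h) \<partial>prior K P)"
  have gh[measurable]: "(\<lambda>nu. g (nu, h)) \<in> borel_measurable (prior K P)" for h
    using measurable_Pair2'[of h "count_space UNIV" "prior K P"] g by measurable
  have mL[measurable]: "(\<lambda>mu. pmf (hist_pmf pol mu n) h) \<in> borel_measurable (prior K P)" for h by (rule meas_L)
  have "(\<integral>\<^sup>+\<omega>. g (snd (snd \<omega>), fst (snd \<omega>)) \<partial>bandit_post_model K P pol n) =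
    (\<integral>\<^sup>+mu. \<integral>\<^sup>+h. \<integral>\<^sup>+nu. ennreal (L mu h n * L nu h n / evidence K P pol n h) * g (nu, h)
        \<partial>prior K P \<partial>count_space UNIV \<partial>prior K P)"
    by (subst post_nn) (auto simp: measurable_compose[OF _ g])
  also have "\<dots> = (\<integral>\<^sup>+mu. \<integral>\<^sup>+h. ennreal (L mu h n / evidence K P pol n h) * A h \<partial>count_space UNIV \<partial>prior K P)"
  proof (intro nn_integral_cong)
    fix mu h
    have "(\<integral>\<^sup>+nu. ennreal (L mu h n * L nu h n / evidence K P pol n h) * g (nu, h) \<partial>prior K P)
        = (\<integral>\<^sup>+nu. ennreal (L mu h n / evidence K P pol n h) * (ennreal (L nu h n) * g (nu, h)) \<partial>prior K P)"
    proof (intro nn_integral_cong)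
      fix x
      have "ennreal (L mu h n * L x h n / evidence K P pol n h) = ennreal (L mu h n / evidence K P pol n h) * ennreal (L x h n)"
        by (subst ennreal_mult[symmetric]) (auto simp: nonneg_ev divide_nonneg_nonneg)
      then show "ennreal (L mu h n * L x h n / evidence K P pol n h) * g (x, h) =
         ennreal (L mu h n / evidence K P pol n h) * (ennreal (L x h n) * g (x, h))"
        by (simp add: mult.assoc)
    qed
    also have "\<dots> = ennreal (L mu h n / evidence K P pol n h) * A h"
      unfolding A_def by (rule nn_integral_cmult) measurable
    finally show "(\<integral>\<^sup>+nu. ennreal (L mu h n * L nu h n / evidence K P pol n h) * g (nu, h) \<partial>prior K P)
        = ennreal (L mu h n / evidence K P pol n h) * A h" .
  qed
  also have "\<dots> = (\<integral>\<^sup>+mu. (\<Sum>h\<in>Hs K n. ennreal (L mu h n / evidence K P pol n h) * A h) \<partial>prior K P)"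
    by (intro nn_integral_cong count_to_sum) (simp add: pmf_hist_zero)
  also have "\<dots> = (\<Sum>h\<in>Hs K n. (\<integral>\<^sup>+mu. ennreal (L mu h n / evidence K P pol n h) \<partial>prior K P) * A h)"
    by (subst nn_integral_sum) (auto intro!: sum.cong nn_integral_multc)
  also have "\<dots> \<le> (\<Sum>h\<in>Hs K n. A h)"
  proof (intro sum_mono)
    fix h
    have "(\<integral>\<^sup>+mu. ennreal (L mu h n / evidence K P pol n h) \<partial>prior K P)
        = (\<integral>\<^sup>+mu. ennreal (L mu h n) * ennreal (1 / evidence K P pol n h) \<partial>prior K P)"
      by (intro nn_integral_cong) (subst ennreal_mult[symmetric], auto simp: nonneg_ev)
    also have "\<dots> = ennreal (evidence K P pol n h) * ennreal (1 / evidence K P pol n h)"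
      by (subst nn_integral_multc) (auto simp: nn_L)
    also have "\<dots> = ennreal (evidence K P pol n h * (1 / evidence K P pol n h))"
      by (subst ennreal_mult[symmetric]) (auto simp: nonneg_ev)
    also have "\<dots> \<le> 1"
    proof -
      have "evidence K P pol n h * (1 / evidence K P pol n h) \<le> 1"
        by (cases "evidence K P pol n h = 0") auto
      thus ?thesis using ennreal_leI[of "evidence K P pol n h * (1 / evidence K P pol n h)" 1] by simp
    qed
    finally have "(\<integral>\<^sup>+mu. ennreal (L mu h n / evidence K P pol n h) \<partial>prior K P) \<le> 1" .
    thus "(\<integral>\<^sup>+mu. ennreal (L mu h n / evidence K P pol n h) \<partial>prior K P) * A h \<le> A h"
      using mult_right_mono[of _ 1 "A h"] by simp
  qed
  also have "\<dots> = (\<integral>\<^sup>+mu. (\<Sum>h\<in>Hs K n. ennreal (L mu h n) * g (mu, h)) \<partial>prior K P)"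
    unfolding A_def by (subst nn_integral_sum) auto
  also have "\<dots> = (\<integral>\<^sup>+\<omega>. g \<omega> \<partial>bandit_joint K P pol n)"
    by (simp add: joint_nn[OF g] nn_integral_pmf_count)
  finally show ?thesis .
qed

lemma prob_joint: "prob_space (bandit_joint K P pol n)"
proof (rule prob_spaceI)
  interpret Pr: prob_space "prior K P" by (rule prob_prior)
  have "emeasure (bandit_joint K P pol n) (space (bandit_joint K P pol n)) = (\<integral>\<^sup>+\<omega>. 1 \<partial>bandit_joint K P pol n)"
    by simp
  also have "\<dots> = (\<integral>\<^sup>+mu. (\<integral>\<^sup>+h. 1 \<partial>measure_pmf (hist_pmf pol mu n)) \<partial>prior K P)"
    by (rule joint_nn) simp
  also have "\<dots> = 1" by (simp add: Pr.emeasure_space_1)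
  finally show "emeasure (bandit_joint K P pol n) (space (bandit_joint K P pol n)) = 1" .
qed

lemma AE_joint_fst:
  assumes Q[measurable]: "Measurable.pred (prior K P) Q" and ae: "AE mu in prior K P. Q mu"
  shows "AE \<omega> in bandit_joint K P pol n. Q (fst \<omega>)"
proof -
  have [measurable]: "Measurable.pred (bandit_joint K P pol n) (\<lambda>\<omega>. Q (fst \<omega>))"
    unfolding bandit_joint_def by measurable
  have "(\<integral>\<^sup>+\<omega>. indicator {\<omega>. \<not> Q (fst \<omega>)} \<omega> \<partial>bandit_joint K P pol n)
       = (\<integral>\<^sup>+mu. (\<integral>\<^sup>+h. indicator {\<omega>. \<not> Q (fst \<omega>)} (mu, h) \<partial>measure_pmf (hist_pmf pol mu n)) \<partial>prior K P)"
    by (rule joint_nn) measurable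
  also have "\<dots> = (\<integral>\<^sup>+mu. 0 \<partial>prior K P)"
    by (intro nn_integral_cong_AE) (use ae in \<open>auto elim!: eventually_mono simp: indicator_def\<close>)
  finally have "(\<integral>\<^sup>+\<omega>. indicator {\<omega>. \<not> Q (fst \<omega>)} \<omega> \<partial>bandit_joint K P pol n) = 0" by simp
  thus ?thesis by (subst AE_iff_nn_integral) auto
qed

lemma pred_unit: "Measurable.pred (prior K P) (\<lambda>mu. \<forall>i\<in>{..<K}. 0 \<le> mu i \<and> mu i \<le> 1)"
proof (rule pred_intros_finite(3))
  fix i assume "i \<in> {..<K}"
  hence [measurable]: "(\<lambda>mu. mu i) \<in> borel_measurable (prior K P)" by (intro meas_comp) auto
  show "Measurable.pred (prior K P) (\<lambda>mu. 0 \<le> mu i \<and> mu i \<le> 1)" by measurable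
qed auto

lemma AE_unit: "AE mu in prior K P. \<forall>i\<in>{..<K}. 0 \<le> mu i \<and> mu i \<le> 1"
proof (rule AE_finite_allI)
  fix i assume i: "i \<in> {..<K}"
  interpret Pi: prob_space "P i" using P_ok i by auto
  have "AE x in P i. x \<in> {0..1}"
    by (rule Pi.AE_prob_1) (use P_ok i in auto)
  moreover have "\<And>j. j \<in> {..<K} \<Longrightarrow> prob_space (P j)" using P_ok by auto
  ultimately have "AE mu in prior K P. mu i \<in> {0..1}"
    unfolding prior_def using AE_PiM_component[of "{..<K}" P i "\<lambda>x. x \<in> {0..1}"] i by blast
  thus "AE mu in prior K P. 0 \<le> mu i \<and> mu i \<le> 1" by (auto elim: eventually_mono)
qed auto

end

definition eq :: "nat \<Rightarrow> (nat \<Rightarrow> real) \<Rightarrow> history \<Rightarrow> real" where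
  "eq K q h = (\<Sum>i<K. q i * emp h i)"

lemma emp_bounds: "0 \<le> emp h i" "emp h i \<le> 1"
  unfolding emp_def using succs_le[of h i] by (auto simp: divide_le_eq_1)

lemma eq_bound:
  assumes q: "\<And>i. i < K \<Longrightarrow> q i \<ge> 0" and qs: "(\<Sum>i<K. q i) = 1"
  shows "\<bar>eq K q h\<bar> \<le> 1"
proof -
  have "0 \<le> eq K q h" unfolding eq_def using q emp_bounds by (auto intro!: sum_nonneg)
  moreover have "eq K q h \<le> (\<Sum>i<K. q i * 1)" unfolding eq_def
    using q emp_bounds by (intro sum_mono mult_left_mono) auto
  ultimately show ?thesis using qs by simp
qed

lemma convex_exp_abs: "l \<ge> 0 \<Longrightarrow> convex_on UNIV (\<lambda>x::real. exp (l * \<bar>x\<bar>))"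
proof (rule convex_onI)
  fix t x y :: real assume l: "l \<ge> 0" and t: "t > 0" "t < 1"
  have "\<bar>(1 - t) *\<^sub>R x + t *\<^sub>R y\<bar> \<le> (1 - t) * \<bar>x\<bar> + t * \<bar>y\<bar>"
  proof -
    have "\<bar>(1 - t) *\<^sub>R x + t *\<^sub>R y\<bar> \<le> \<bar>(1 - t) * x\<bar> + \<bar>t * y\<bar>"
      using abs_triangle_ineq[of "(1 - t) * x" "t * y"] by simp
    also have "\<dots> = (1 - t) * \<bar>x\<bar> + t * \<bar>y\<bar>" using t by (simp add: abs_mult)
    finally show ?thesis .
  qed
  hence "l * \<bar>(1 - t) *\<^sub>R x + t *\<^sub>R y\<bar> \<le> l * ((1 - t) * \<bar>x\<bar> + t * \<bar>y\<bar>)"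
    using l by (rule mult_left_mono)
  hence "exp (l * \<bar>(1 - t) *\<^sub>R x + t *\<^sub>R y\<bar>) \<le> exp ((1 - t) *\<^sub>R (l * \<bar>x\<bar>) + t *\<^sub>R (l * \<bar>y\<bar>))"
    by (simp add: algebra_simps)
  also have "\<dots> \<le> (1 - t) * exp (l * \<bar>x\<bar>) + t * exp (l * \<bar>y\<bar>)"
    using convex_onD[OF exp_convex, of t "l * \<bar>x\<bar>" "l * \<bar>y\<bar>"] t by simp
  finally show "exp (l * \<bar>(1 - t) *\<^sub>R x + t *\<^sub>R y\<bar>) \<le> (1 - t) * exp (l * \<bar>x\<bar>) + t * exp (l * \<bar>y\<bar>)" .
qed auto

context bsetup
begin

lemma meas_pair_h:
  fixes f :: "(nat \<Rightarrow> real) \<Rightarrow> history \<Rightarrow> 'c"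
  assumes "\<And>h. (\<lambda>mu. f mu h) \<in> measurable (prior K P) N"
  shows "(\<lambda>\<omega>. f (fst \<omega>) (snd \<omega>)) \<in> measurable (prior K P \<Otimes>\<^sub>M count_space UNIV) N"
  by (rule measurable_compose_countable'[where f="\<lambda>h \<omega>. f (fst \<omega>) h" and g=snd and I=UNIV])
     (auto intro: measurable_compose[OF measurable_fst assms])

lemma meas_muq: "(\<lambda>mu. \<Sum>i<K. q i * mu i) \<in> borel_measurable (prior K P)"
  by (intro borel_measurable_sum borel_measurable_times borel_measurable_const meas_comp) auto

lemma meas_G: "(\<lambda>\<omega>. ennreal (exp (l * \<bar>(\<Sum>i<K. q i * fst \<omega> i) - eq K q (snd \<omega>)\<bar>)))
    \<in> borel_measurable (prior K P \<Otimes>\<^sub>M count_space UNIV)"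
proof (rule meas_pair_h[where f="\<lambda>mu h. ennreal (exp (l * \<bar>(\<Sum>i<K. q i * mu i) - eq K q h\<bar>))"])
  fix h
  have [measurable]: "(\<lambda>mu. \<Sum>i<K. q i * mu i) \<in> borel_measurable (prior K P)" by (rule meas_muq)
  show "(\<lambda>mu. ennreal (exp (l * \<bar>(\<Sum>i<K. q i * mu i) - eq K q h\<bar>))) \<in> borel_measurable (prior K P)"
    by measurable
qed

lemma AE_good:
  fixes q :: "nat \<Rightarrow> real" and e l r :: real
  assumes hyp: "\<forall>i<K. q i \<noteq> 0 \<longrightarrow> (AE \<omega> in bandit_joint K P pol n. real (num_samples (snd \<omega>) i) \<ge> 1 / e\<^sup>2)"
  shows "AE \<omega> in bandit_joint K P pol n. good K q e (snd \<omega>)"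
proof -
  have "AE \<omega> in bandit_joint K P pol n. \<forall>i\<in>{..<K}. q i \<noteq> 0 \<longrightarrow> real (num_samples (snd \<omega>) i) \<ge> 1 / e\<^sup>2"
  proof (rule AE_finite_allI)
    fix i assume i: "i \<in> {..<K}"
    show "AE \<omega> in bandit_joint K P pol n. q i \<noteq> 0 \<longrightarrow> real (num_samples (snd \<omega>) i) \<ge> 1 / e\<^sup>2"
    proof (cases "q i = 0")
      case False thus ?thesis using hyp i by (auto elim: eventually_mono)
    qed simp
  qed simp
  thus ?thesis unfolding good_def by (auto elim: eventually_mono)
qed

lemma core_joint:
  fixes q :: "nat \<Rightarrow> real" and e l r :: real
  assumes e: "e > 0" and l: "l \<ge> 0" and q: "\<And>i. i < K \<Longrightarrow> q i \<ge> 0" and qs: "(\<Sum>i<K. q i) = 1"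
    and hyp: "\<forall>i<K. q i \<noteq> 0 \<longrightarrow> (AE \<omega> in bandit_joint K P pol n. real (num_samples (snd \<omega>) i) \<ge> 1 / e\<^sup>2)"
  shows "(\<integral>\<^sup>+\<omega>. ennreal (exp (l * \<bar>(\<Sum>i<K. q i * fst \<omega> i) - eq K q (snd \<omega>)\<bar>)) \<partial>bandit_joint K P pol n)
          \<le> ennreal (12 * exp (2 * l\<^sup>2 * e\<^sup>2))"
proof -
  interpret Pr: prob_space "prior K P" by (rule prob_prior)
  have mg: "(\<lambda>\<omega>. ennreal (if good K q e (snd \<omega>) then exp (l * \<bar>(\<Sum>i<K. q i * fst \<omega> i) - eq K q (snd \<omega>)\<bar>) else 0))
      \<in> borel_measurable (prior K P \<Otimes>\<^sub>M count_space UNIV)"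
  proof (rule meas_pair_h[where f="\<lambda>mu h. ennreal (if good K q e h then exp (l * \<bar>(\<Sum>i<K. q i * mu i) - eq K q h\<bar>) else 0)"])
    fix h
    have [measurable]: "(\<lambda>mu. \<Sum>i<K. q i * mu i) \<in> borel_measurable (prior K P)" by (rule meas_muq)
    show "(\<lambda>mu. ennreal (if good K q e h then exp (l * \<bar>(\<Sum>i<K. q i * mu i) - eq K q h\<bar>) else 0)) \<in> borel_measurable (prior K P)"
      by measurable
  qed
  have "(\<integral>\<^sup>+\<omega>. ennreal (exp (l * \<bar>(\<Sum>i<K. q i * fst \<omega> i) - eq K q (snd \<omega>)\<bar>)) \<partial>bandit_joint K P pol n)
      = (\<integral>\<^sup>+\<omega>. ennreal (if good K q e (snd \<omega>) then exp (l * \<bar>(\<Sum>i<K. q i * fst \<omega> i) - eq K q (snd \<omega>)\<bar>) else 0) \<partial>bandit_joint K P pol n)"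
    by (intro nn_integral_cong_AE) (use AE_good[OF hyp] in \<open>auto elim!: eventually_mono\<close>)
  also have "\<dots> = (\<integral>\<^sup>+mu. (\<integral>\<^sup>+h. ennreal (if good K q e h then exp (l * \<bar>(\<Sum>i<K. q i * mu i) - eq K q h\<bar>) else 0)
        \<partial>measure_pmf (hist_pmf pol mu n)) \<partial>prior K P)"
    by (subst joint_nn[OF mg]) (simp only: fst_conv snd_conv)
  also have "\<dots> \<le> (\<integral>\<^sup>+mu. ennreal (12 * exp (2 * l\<^sup>2 * e\<^sup>2)) \<partial>prior K P)"
  proof (intro nn_integral_mono_AE)
    show "AE mu in prior K P. (\<integral>\<^sup>+h. ennreal (if good K q e h then exp (l * \<bar>(\<Sum>i<K. q i * mu i) - eq K q h\<bar>) else 0)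
        \<partial>measure_pmf (hist_pmf pol mu n)) \<le> ennreal (12 * exp (2 * l\<^sup>2 * e\<^sup>2))"
      using AE_unit
    proof (rule eventually_mono)
      fix mu :: "nat \<Rightarrow> real" assume mu: "\<forall>i\<in>{..<K}. 0 \<le> mu i \<and> mu i \<le> 1"
      show "(\<integral>\<^sup>+h. ennreal (if good K q e h then exp (l * \<bar>(\<Sum>i<K. q i * mu i) - eq K q h\<bar>) else 0)
        \<partial>measure_pmf (hist_pmf pol mu n)) \<le> ennreal (12 * exp (2 * l\<^sup>2 * e\<^sup>2))"
        unfolding eq_def by (rule core_mu[OF e l _ q qs]) (use mu in auto)
    qed
  qed
  also have "\<dots> = ennreal (12 * exp (2 * l\<^sup>2 * e\<^sup>2))" by (simp add: Pr.emeasure_space_1)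
  finally show ?thesis .
qed

lemma arith_final:
  assumes e: "e > 0" and r: "r > 0"
  shows "ennreal (exp (- (r / (8 * e) * (r * e / 2)))) * (ennreal (12 * exp (2 * (r / (8 * e))\<^sup>2 * e\<^sup>2)) + ennreal (12 * exp (2 * (r / (8 * e))\<^sup>2 * e\<^sup>2)))
        = ennreal (24 * exp (- (r\<^sup>2) / 32))"
proof -
  have "ennreal (12 * exp (2 * (r / (8 * e))\<^sup>2 * e\<^sup>2)) + ennreal (12 * exp (2 * (r / (8 * e))\<^sup>2 * e\<^sup>2))
      = ennreal (24 * exp (2 * (r / (8 * e))\<^sup>2 * e\<^sup>2))"
    by (subst ennreal_plus[symmetric]) auto
  moreover have "ennreal (exp (- (r / (8 * e) * (r * e / 2)))) * ennreal (24 * exp (2 * (r / (8 * e))\<^sup>2 * e\<^sup>2))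
      = ennreal (exp (- (r / (8 * e) * (r * e / 2))) * (24 * exp (2 * (r / (8 * e))\<^sup>2 * e\<^sup>2)))"
    by (subst ennreal_mult[symmetric]) auto
  moreover have "exp (- (r / (8 * e) * (r * e / 2))) * (24 * exp (2 * (r / (8 * e))\<^sup>2 * e\<^sup>2)) = 24 * exp (- (r\<^sup>2) / 32)"
  proof -
    have "- (r / (8 * e) * (r * e / 2)) + 2 * (r / (8 * e))\<^sup>2 * e\<^sup>2 = - (r\<^sup>2) / 32"
      using e by (simp add: power2_eq_square field_simps)
    hence "exp (- (r / (8 * e) * (r * e / 2))) * exp (2 * (r / (8 * e))\<^sup>2 * e\<^sup>2) = exp (- (r\<^sup>2) / 32)"
      by (simp add: exp_add[symmetric])
    thus ?thesis by (simp add: algebra_simps)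
  qed
  ultimately show ?thesis by simp
qed

end

context bsetup
begin

lemma post_bound:
  fixes q :: "nat \<Rightarrow> real" and e l r :: real
  assumes e: "e > 0" and r: "r > 0" and q: "\<And>i. i < K \<Longrightarrow> q i \<ge> 0" and qs: "(\<Sum>i<K. q i) = 1"
    and hyp: "\<forall>i<K. q i \<noteq> 0 \<longrightarrow> (AE \<omega> in bandit_joint K P pol n. real (num_samples (snd \<omega>) i) \<ge> 1 / e\<^sup>2)"
  shows "emeasure (bandit_post_model K P pol n)
           {\<omega> \<in> space (bandit_post_model K P pol n).
              \<bar>(\<Sum>i<K. q i * snd (snd \<omega>) i) - (\<Sum>i<K. q i * fst \<omega> i)\<bar> \<ge> r * e}
         \<le> ennreal (24 * exp (- (r\<^sup>2) / 32))"
proof -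
  define l where "l = r / (8 * e)"
  define a where "a = r * e / 2"
  have l0: "l \<ge> 0" using e r by (simp add: l_def)
  define G where "G = (\<lambda>\<omega>::((nat \<Rightarrow> real) \<times> history). ennreal (exp (l * \<bar>(\<Sum>i<K. q i * fst \<omega> i) - eq K q (snd \<omega>)\<bar>)))"
  have Gm[measurable]: "G \<in> borel_measurable (prior K P \<Otimes>\<^sub>M count_space UNIV)" unfolding G_def by (rule meas_G)
  define B where "B = {\<omega> \<in> space (bandit_post_model K P pol n).
              \<bar>(\<Sum>i<K. q i * snd (snd \<omega>) i) - (\<Sum>i<K. q i * fst \<omega> i)\<bar> \<ge> r * e}"
  have m1[measurable]: "(\<lambda>\<omega>. G (snd (snd \<omega>), fst (snd \<omega>))) \<in> borel_measurable (bandit_post_model K P pol n)"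
    unfolding bandit_post_model_def by measurable
  have m2[measurable]: "(\<lambda>\<omega>. G (fst \<omega>, fst (snd \<omega>))) \<in> borel_measurable (bandit_post_model K P pol n)"
    unfolding bandit_post_model_def by measurable
  have "emeasure (bandit_post_model K P pol n) B \<le> ennreal (24 * exp (- (r\<^sup>2) / 32))"
  proof (cases "B \<in> sets (bandit_post_model K P pol n)")
    case False thus ?thesis by (simp add: emeasure_notin_sets)
  next
    case True
    have "emeasure (bandit_post_model K P pol n) B = (\<integral>\<^sup>+\<omega>. indicator B \<omega> \<partial>bandit_post_model K P pol n)"
      using True by simp
    also have "\<dots> \<le> (\<integral>\<^sup>+\<omega>. ennreal (exp (- (l * a))) * (G (snd (snd \<omega>), fst (snd \<omega>)) + G (fst \<omega>, fst (snd \<omega>))) \<partial>bandit_post_model K P pol n)"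
    proof (intro nn_integral_mono)
      fix \<omega>
      show "indicator B \<omega> \<le> ennreal (exp (- (l * a))) * (G (snd (snd \<omega>), fst (snd \<omega>)) + G (fst \<omega>, fst (snd \<omega>)))"
      proof (cases "\<omega> \<in> B")
        case True
        define x where "x = (\<Sum>i<K. q i * snd (snd \<omega>) i)"
        define y where "y = (\<Sum>i<K. q i * fst \<omega> i)"
        define z where "z = eq K q (fst (snd \<omega>))"
        have "\<bar>x - y\<bar> \<ge> 2 * a" using True by (simp add: B_def x_def y_def a_def)
        hence "\<bar>x - z\<bar> \<ge> a \<or> \<bar>y - z\<bar> \<ge> a" by linarith
        hence "1 \<le> exp (- (l * a)) * (exp (l * \<bar>x - z\<bar>) + exp (l * \<bar>y - z\<bar>))"
        proof
          assume h: "\<bar>x - z\<bar> \<ge> a"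
          have "1 = exp (- (l * a)) * exp (l * a)" by (simp add: exp_minus field_simps)
          also have "\<dots> \<le> exp (- (l * a)) * exp (l * \<bar>x - z\<bar>)"
            using h l0 by (simp add: mult_left_mono)
          also have "\<dots> \<le> exp (- (l * a)) * (exp (l * \<bar>x - z\<bar>) + exp (l * \<bar>y - z\<bar>))"
            by (intro mult_left_mono) auto
          finally show ?thesis .
        next
          assume h: "\<bar>y - z\<bar> \<ge> a"
          have "1 = exp (- (l * a)) * exp (l * a)" by (simp add: exp_minus field_simps)
          also have "\<dots> \<le> exp (- (l * a)) * exp (l * \<bar>y - z\<bar>)"
            using h l0 by (simp add: mult_left_mono)
          also have "\<dots> \<le> exp (- (l * a)) * (exp (l * \<bar>x - z\<bar>) + exp (l * \<bar>y - z\<bar>))"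
            by (intro mult_left_mono) auto
          finally show ?thesis .
        qed
        hence "ennreal 1 \<le> ennreal (exp (- (l * a)) * (exp (l * \<bar>x - z\<bar>) + exp (l * \<bar>y - z\<bar>)))"
          by (rule ennreal_leI)
        also have "\<dots> = ennreal (exp (- (l * a))) * (G (snd (snd \<omega>), fst (snd \<omega>)) + G (fst \<omega>, fst (snd \<omega>)))"
          unfolding G_def x_def y_def z_def
          by (simp add: ennreal_mult ennreal_plus)
        finally show ?thesis using True by simp
      qed simp
    qed
    also have "\<dots> = ennreal (exp (- (l * a))) * ((\<integral>\<^sup>+\<omega>. G (snd (snd \<omega>), fst (snd \<omega>)) \<partial>bandit_post_model K P pol n)
                  + (\<integral>\<^sup>+\<omega>. G (fst \<omega>, fst (snd \<omega>)) \<partial>bandit_post_model K P pol n))"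
      by (subst nn_integral_cmult) (measurable, simp add: nn_integral_add)
    also have "\<dots> \<le> ennreal (exp (- (l * a))) * ((\<integral>\<^sup>+\<omega>. G \<omega> \<partial>bandit_joint K P pol n) + (\<integral>\<^sup>+\<omega>. G \<omega> \<partial>bandit_joint K P pol n))"
      by (intro mult_left_mono add_mono transfer_nu transfer_mu Gm) auto
    also have "\<dots> \<le> ennreal (exp (- (l * a))) * (ennreal (12 * exp (2 * l\<^sup>2 * e\<^sup>2)) + ennreal (12 * exp (2 * l\<^sup>2 * e\<^sup>2)))"
      unfolding G_def by (intro mult_left_mono add_mono core_joint[OF e l0 q qs hyp]) auto
    also have "\<dots> = ennreal (24 * exp (- (r\<^sup>2) / 32))"
      unfolding l_def a_def by (rule arith_final[OF e r])
    finally show ?thesis .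
  qed
  thus ?thesis by (simp add: B_def)
qed

end

context bsetup
begin

lemma cexp_bound:
  fixes q :: "nat \<Rightarrow> real" and e r :: real
  assumes e: "e > 0" and r: "r > 0" and q: "\<And>i. i < K \<Longrightarrow> q i \<ge> 0" and qs: "(\<Sum>i<K. q i) = 1"
    and hyp: "\<forall>i<K. q i \<noteq> 0 \<longrightarrow> (AE \<omega> in bandit_joint K P pol n. real (num_samples (snd \<omega>) i) \<ge> 1 / e\<^sup>2)"
  shows "emeasure (bandit_joint K P pol n)
           {\<omega> \<in> space (bandit_joint K P pol n).
              \<bar>real_cond_exp (bandit_joint K P pol n) (hist_algebra K P pol n)
                   (\<lambda>\<omega>. \<Sum>i<K. q i * fst \<omega> i) \<omega>
                 - (\<Sum>i<K. q i * fst \<omega> i)\<bar> \<ge> r * e}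
         \<le> ennreal (24 * exp (- (r\<^sup>2) / 32))"
proof -
  define M where "M = bandit_joint K P pol n"
  define F where "F = hist_algebra K P pol n"
  define l where "l = r / (8 * e)"
  define a where "a = r * e / 2"
  have l0: "l \<ge> 0" using e r by (simp add: l_def)
  interpret prob_space M unfolding M_def by (rule prob_joint)
  have snd_meas: "snd \<in> measurable M (count_space UNIV)"
    unfolding M_def bandit_joint_def by measurable
  have sub: "subalgebra M F"
    unfolding subalgebra_def F_def hist_algebra_def M_def[symmetric]
    using snd_meas by (simp add: measurable_iff_sets)
  interpret FS: finite_measure_subalgebra M F
    by (simp add: finite_measure_subalgebra_def finite_measure_subalgebra_axioms_def sub finite_measure_axioms)
  define X where "X = (\<lambda>\<omega>::((nat \<Rightarrow> real) \<times> history). \<Sum>i<K. q i * fst \<omega> i)"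
  define Ee where "Ee = (\<lambda>\<omega>::((nat \<Rightarrow> real) \<times> history). eq K q (snd \<omega>))"
  define Gf where "Gf = (\<lambda>\<omega>. exp (l * \<bar>X \<omega> - Ee \<omega>\<bar>))"
  have mq[measurable]: "(\<lambda>mu. \<Sum>i<K. q i * mu i) \<in> borel_measurable (prior K P)" by (rule meas_muq)
  have Xm[measurable]: "X \<in> borel_measurable M"
    unfolding X_def M_def bandit_joint_def by measurable
  have Eem[measurable]: "Ee \<in> borel_measurable M"
    unfolding Ee_def using snd_meas by measurable
  have EeF: "Ee \<in> borel_measurable F"
  proof -
    have "snd \<in> measurable F (count_space UNIV)"
      unfolding F_def hist_algebra_def by (rule measurable_vimage_algebra1) auto
    thus ?thesis unfolding Ee_def by measurable
  qed
  have Gm[measurable]: "Gf \<in> borel_measurable M" unfolding Gf_def by measurable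
  have AEu: "AE \<omega> in M. \<forall>i\<in>{..<K}. 0 \<le> fst \<omega> i \<and> fst \<omega> i \<le> 1"
    unfolding M_def by (rule AE_joint_fst[OF pred_unit AE_unit])
  have AEX: "AE \<omega> in M. \<bar>X \<omega>\<bar> \<le> 1"
    using AEu
  proof (rule eventually_mono)
    fix \<omega> :: "(nat \<Rightarrow> real) \<times> history" assume h: "\<forall>i\<in>{..<K}. 0 \<le> fst \<omega> i \<and> fst \<omega> i \<le> 1"
    have "0 \<le> X \<omega>" unfolding X_def using h q by (auto intro!: sum_nonneg)
    moreover have "X \<omega> \<le> (\<Sum>i<K. q i * 1)" unfolding X_def
      using h q by (intro sum_mono mult_left_mono) auto
    ultimately show "\<bar>X \<omega>\<bar> \<le> 1" using qs by simp
  qed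
  have Eeb: "\<bar>Ee \<omega>\<bar> \<le> 1" for \<omega> unfolding Ee_def by (rule eq_bound[OF q qs])
  have intX: "integrable M X"
    by (rule integrable_const_bound[where B=1]) (use AEX in auto)
  have intEe: "integrable M Ee"
    by (rule integrable_const_bound[where B=1]) (use Eeb in auto)
  have intY: "integrable M (\<lambda>\<omega>. X \<omega> - Ee \<omega>)" using intX intEe by auto
  have intG: "integrable M Gf"
  proof (rule integrable_const_bound[where B="exp (l * 2)"])
    show "AE \<omega> in M. norm (Gf \<omega>) \<le> exp (l * 2)"
      using AEX
    proof (rule eventually_mono)
      fix \<omega> assume "\<bar>X \<omega>\<bar> \<le> 1"
      hence "\<bar>X \<omega> - Ee \<omega>\<bar> \<le> 2" using Eeb[of \<omega>] by linarith
      hence "l * \<bar>X \<omega> - Ee \<omega>\<bar> \<le> l * 2" using l0 by (rule mult_left_mono)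
      thus "norm (Gf \<omega>) \<le> exp (l * 2)" by (simp add: Gf_def)
    qed
  qed simp
  let ?RC = "real_cond_exp M F X"
  let ?RY = "real_cond_exp M F (\<lambda>\<omega>. X \<omega> - Ee \<omega>)"
  let ?RG = "real_cond_exp M F Gf"
  have AE1: "AE \<omega> in M. ?RY \<omega> = ?RC \<omega> - Ee \<omega>"
    using FS.real_cond_exp_diff[OF intX intEe] FS.real_cond_exp_F_meas[OF intEe EeF]
    by eventually_elim simp
  have Jen: "AE \<omega> in M. exp (l * \<bar>?RY \<omega>\<bar>) \<le> ?RG \<omega>"
  proof -
    have "AE \<omega> in M. (\<lambda>x. exp (l * \<bar>x\<bar>)) (?RY \<omega>) \<le> real_cond_exp M F (\<lambda>\<omega>. (\<lambda>x. exp (l * \<bar>x\<bar>)) (X \<omega> - Ee \<omega>)) \<omega>"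
      by (rule FS.real_cond_exp_jensens_inequality(2)[OF intY, where I=UNIV])
         (use intG convex_exp_abs[OF l0] in \<open>auto simp: Gf_def\<close>)
    thus ?thesis by (simp add: Gf_def)
  qed
  have posG: "AE \<omega> in M. 0 \<le> ?RG \<omega>"
    by (rule FS.real_cond_exp_pos) (auto simp: Gf_def)
  have RGm[measurable]: "?RG \<in> borel_measurable M" by (rule borel_measurable_cond_exp2)
  have RYm[measurable]: "?RY \<in> borel_measurable M" by (rule borel_measurable_cond_exp2)
  have RCm[measurable]: "?RC \<in> borel_measurable M" by (rule borel_measurable_cond_exp2)
  have nnRG: "(\<integral>\<^sup>+\<omega>. ennreal (?RG \<omega>) \<partial>M) = (\<integral>\<^sup>+\<omega>. ennreal (Gf \<omega>) \<partial>M)"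
  proof -
    have "(\<integral>\<^sup>+\<omega>. ennreal (?RG \<omega>) \<partial>M) = ennreal (\<integral>\<omega>. ?RG \<omega> \<partial>M)"
      by (rule nn_integral_eq_integral[OF FS.real_cond_exp_int(1)[OF intG] posG])
    also have "\<dots> = ennreal (\<integral>\<omega>. Gf \<omega> \<partial>M)" by (simp add: FS.real_cond_exp_int(2)[OF intG])
    also have "\<dots> = (\<integral>\<^sup>+\<omega>. ennreal (Gf \<omega>) \<partial>M)"
      by (rule nn_integral_eq_integral[symmetric, OF intG]) (auto simp: Gf_def)
    finally show ?thesis .
  qed
  have core: "(\<integral>\<^sup>+\<omega>. ennreal (Gf \<omega>) \<partial>M) \<le> ennreal (12 * exp (2 * l\<^sup>2 * e\<^sup>2))"
    unfolding Gf_def X_def Ee_def M_def by (rule core_joint[OF e l0 q qs hyp])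
  define B where "B = {\<omega> \<in> space M. \<bar>?RC \<omega> - X \<omega>\<bar> \<ge> r * e}"
  have "emeasure M B \<le> ennreal (24 * exp (- (r\<^sup>2) / 32))"
  proof (cases "B \<in> sets M")
    case False thus ?thesis by (simp add: emeasure_notin_sets)
  next
    case True
    have "emeasure M B = (\<integral>\<^sup>+\<omega>. indicator B \<omega> \<partial>M)" using True by simp
    also have "\<dots> \<le> (\<integral>\<^sup>+\<omega>. ennreal (exp (- (l * a))) * (ennreal (exp (l * \<bar>?RY \<omega>\<bar>)) + ennreal (Gf \<omega>)) \<partial>M)"
    proof (intro nn_integral_mono_AE)
      show "AE \<omega> in M. indicator B \<omega> \<le> ennreal (exp (- (l * a))) * (ennreal (exp (l * \<bar>?RY \<omega>\<bar>)) + ennreal (Gf \<omega>))"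
        using AE1
      proof (rule eventually_mono)
        fix \<omega> assume ae1: "?RY \<omega> = ?RC \<omega> - Ee \<omega>"
        show "indicator B \<omega> \<le> ennreal (exp (- (l * a))) * (ennreal (exp (l * \<bar>?RY \<omega>\<bar>)) + ennreal (Gf \<omega>))"
        proof (cases "\<omega> \<in> B")
          case True
          define x where "x = ?RY \<omega>"
          define y where "y = X \<omega> - Ee \<omega>"
          have "\<bar>?RC \<omega> - X \<omega>\<bar> \<ge> 2 * a" using True by (simp add: B_def a_def)
          hence "\<bar>x - y\<bar> \<ge> 2 * a" using ae1 by (simp add: x_def y_def)
          hence "\<bar>x\<bar> \<ge> a \<or> \<bar>y\<bar> \<ge> a" by linarith
          hence "1 \<le> exp (- (l * a)) * (exp (l * \<bar>x\<bar>) + exp (l * \<bar>y\<bar>))"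
          proof
            assume h: "\<bar>x\<bar> \<ge> a"
            have "1 = exp (- (l * a)) * exp (l * a)" by (simp add: exp_minus field_simps)
            also have "\<dots> \<le> exp (- (l * a)) * exp (l * \<bar>x\<bar>)"
              using h l0 by (simp add: mult_left_mono)
            also have "\<dots> \<le> exp (- (l * a)) * (exp (l * \<bar>x\<bar>) + exp (l * \<bar>y\<bar>))"
              by (intro mult_left_mono) auto
            finally show ?thesis .
          next
            assume h: "\<bar>y\<bar> \<ge> a"
            have "1 = exp (- (l * a)) * exp (l * a)" by (simp add: exp_minus field_simps)
            also have "\<dots> \<le> exp (- (l * a)) * exp (l * \<bar>y\<bar>)"
              using h l0 by (simp add: mult_left_mono)
            also have "\<dots> \<le> exp (- (l * a)) * (exp (l * \<bar>x\<bar>) + exp (l * \<bar>y\<bar>))"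
              by (intro mult_left_mono) auto
            finally show ?thesis .
          qed
          hence "ennreal 1 \<le> ennreal (exp (- (l * a)) * (exp (l * \<bar>x\<bar>) + exp (l * \<bar>y\<bar>)))"
            by (rule ennreal_leI)
          also have "\<dots> = ennreal (exp (- (l * a))) * (ennreal (exp (l * \<bar>?RY \<omega>\<bar>)) + ennreal (Gf \<omega>))"
            unfolding Gf_def x_def y_def by (simp add: ennreal_mult ennreal_plus)
          finally show ?thesis using True by simp
        qed simp
      qed
    qed
    also have "\<dots> = ennreal (exp (- (l * a))) * ((\<integral>\<^sup>+\<omega>. ennreal (exp (l * \<bar>?RY \<omega>\<bar>)) \<partial>M) + (\<integral>\<^sup>+\<omega>. ennreal (Gf \<omega>) \<partial>M))"
      by (subst nn_integral_cmult) (measurable, simp add: nn_integral_add)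
    also have "\<dots> \<le> ennreal (exp (- (l * a))) * ((\<integral>\<^sup>+\<omega>. ennreal (?RG \<omega>) \<partial>M) + (\<integral>\<^sup>+\<omega>. ennreal (Gf \<omega>) \<partial>M))"
      by (intro mult_left_mono add_mono nn_integral_mono_AE) (use Jen in \<open>auto elim!: eventually_mono intro: ennreal_leI\<close>)
    also have "\<dots> = ennreal (exp (- (l * a))) * ((\<integral>\<^sup>+\<omega>. ennreal (Gf \<omega>) \<partial>M) + (\<integral>\<^sup>+\<omega>. ennreal (Gf \<omega>) \<partial>M))"
      by (simp add: nnRG)
    also have "\<dots> \<le> ennreal (exp (- (l * a))) * (ennreal (12 * exp (2 * l\<^sup>2 * e\<^sup>2)) + ennreal (12 * exp (2 * l\<^sup>2 * e\<^sup>2)))"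
      by (intro mult_left_mono add_mono core) auto
    also have "\<dots> = ennreal (24 * exp (- (r\<^sup>2) / 32))"
      unfolding l_def a_def by (rule arith_final[OF e r])
    finally show ?thesis .
  qed
  thus ?thesis by (simp add: B_def M_def F_def X_def)
qed

end

theorem lemma2p1:
  "\<exists>C::real. C > 0 \<and>
    (\<forall>(K::nat) (P::nat \<Rightarrow> real measure) (pol::history \<Rightarrow> nat pmf) (t::nat) (\<epsilon>::real) (r::real).
      (\<forall>i<K. prob_space (P i) \<and> sets (P i) = sets borel \<and> measure (P i) {0..1} = 1) \<longrightarrow>
      (\<forall>h. set_pmf (pol h) \<subseteq> {..<K}) \<longrightarrow>
      \<epsilon> > 0 \<longrightarrow> r > 0 \<longrightarrow>
      (\<forall>i<K.
         (AE \<omega> in bandit_joint K P pol t. real (num_samples (snd \<omega>) i) \<ge> 1 / \<epsilon>\<^sup>2) \<longrightarrow>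
         measure (bandit_post_model K P pol t)
           {\<omega> \<in> space (bandit_post_model K P pol t).
              \<bar>snd (snd \<omega>) i - fst \<omega> i\<bar> \<ge> r * \<epsilon>} \<le> C * exp (- (r\<^sup>2) / C) \<and>
         measure (bandit_joint K P pol t)
           {\<omega> \<in> space (bandit_joint K P pol t).
              \<bar>real_cond_exp (bandit_joint K P pol t) (hist_algebra K P pol t) (\<lambda>\<omega>. fst \<omega> i) \<omega>
                 - fst \<omega> i\<bar> \<ge> r * \<epsilon>} \<le> C * exp (- (r\<^sup>2) / C)) \<and>
      (\<forall>q::nat \<Rightarrow> real.
         (\<forall>i<K. q i \<ge> 0) \<longrightarrow> (\<Sum>i<K. q i) = 1 \<longrightarrow>
         (\<forall>i<K. q i \<noteq> 0 \<longrightarrow>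
            (AE \<omega> in bandit_joint K P pol t. real (num_samples (snd \<omega>) i) \<ge> 1 / \<epsilon>\<^sup>2)) \<longrightarrow>
         measure (bandit_post_model K P pol t)
           {\<omega> \<in> space (bandit_post_model K P pol t).
              \<bar>(\<Sum>i<K. q i * snd (snd \<omega>) i) - (\<Sum>i<K. q i * fst \<omega> i)\<bar> \<ge> r * \<epsilon>}
           \<le> C * exp (- (r\<^sup>2) / C) \<and>
         measure (bandit_joint K P pol t)
           {\<omega> \<in> space (bandit_joint K P pol t).
              \<bar>real_cond_exp (bandit_joint K P pol t) (hist_algebra K P pol t)
                   (\<lambda>\<omega>. \<Sum>i<K. q i * fst \<omega> i) \<omega>
                 - (\<Sum>i<K. q i * fst \<omega> i)\<bar> \<ge> r * \<epsilon>} \<le> C * exp (- (r\<^sup>2) / C)))"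
proof (rule exI[of _ 32], rule conjI, simp, intro allI impI conjI)
  fix K :: nat and P :: "nat \<Rightarrow> real measure" and pol :: "history \<Rightarrow> nat pmf" and t :: nat and \<epsilon> r :: real
  assume P_ok: "\<forall>i<K. prob_space (P i) \<and> sets (P i) = sets borel \<and> measure (P i) {0..1} = 1"
    and pol_ok: "\<forall>h. set_pmf (pol h) \<subseteq> {..<K}" and e: "\<epsilon> > 0" and r: "r > 0"
  interpret bsetup K P pol using P_ok pol_ok by unfold_locales auto
  have le: "24 * exp (- (r\<^sup>2) / 32) \<le> 32 * exp (- (r\<^sup>2) / 32)" by simp
  have conv: "measure M A \<le> 32 * exp (- (r\<^sup>2) / 32)" if "emeasure M A \<le> ennreal (24 * exp (- (r\<^sup>2) / 32))" for M :: "'z measure" and A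
  proof -
    have "emeasure M A \<le> ennreal (32 * exp (- (r\<^sup>2) / 32))"
      using that le order_trans ennreal_leI by blast
    thus ?thesis unfolding measure_def by (rule enn2real_leI[rotated]) simp
  qed
  have main: "measure (bandit_post_model K P pol t)
           {\<omega> \<in> space (bandit_post_model K P pol t).
              \<bar>(\<Sum>i<K. q i * snd (snd \<omega>) i) - (\<Sum>i<K. q i * fst \<omega> i)\<bar> \<ge> r * \<epsilon>}
           \<le> 32 * exp (- (r\<^sup>2) / 32) \<and>
         measure (bandit_joint K P pol t)
           {\<omega> \<in> space (bandit_joint K P pol t).
              \<bar>real_cond_exp (bandit_joint K P pol t) (hist_algebra K P pol t)
                   (\<lambda>\<omega>. \<Sum>i<K. q i * fst \<omega> i) \<omega>
                 - (\<Sum>i<K. q i * fst \<omega> i)\<bar> \<ge> r * \<epsilon>} \<le> 32 * exp (- (r\<^sup>2) / 32)"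
    if q: "\<forall>i<K. q i \<ge> 0" and qs: "(\<Sum>i<K. q i) = 1"
      and hyp: "\<forall>i<K. q i \<noteq> 0 \<longrightarrow> (AE \<omega> in bandit_joint K P pol t. real (num_samples (snd \<omega>) i) \<ge> 1 / \<epsilon>\<^sup>2)"
    for q :: "nat \<Rightarrow> real"
    using conv[OF post_bound[OF e r _ qs hyp]] conv[OF cexp_bound[OF e r _ qs hyp]] q by auto
  {
    fix q :: "nat \<Rightarrow> real"
    assume A: "\<forall>i<K. q i \<ge> 0" "(\<Sum>i<K. q i) = 1"
      "\<forall>i<K. q i \<noteq> 0 \<longrightarrow> (AE \<omega> in bandit_joint K P pol t. real (num_samples (snd \<omega>) i) \<ge> 1 / \<epsilon>\<^sup>2)"
    from main[OF A]
    show "measure (bandit_post_model K P pol t)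
           {\<omega> \<in> space (bandit_post_model K P pol t).
              \<bar>(\<Sum>i<K. q i * snd (snd \<omega>) i) - (\<Sum>i<K. q i * fst \<omega> i)\<bar> \<ge> r * \<epsilon>}
           \<le> 32 * exp (- (r\<^sup>2) / 32)" by blast
    from main[OF A]
    show "measure (bandit_joint K P pol t)
           {\<omega> \<in> space (bandit_joint K P pol t).
              \<bar>real_cond_exp (bandit_joint K P pol t) (hist_algebra K P pol t)
                   (\<lambda>\<omega>. \<Sum>i<K. q i * fst \<omega> i) \<omega>
                 - (\<Sum>i<K. q i * fst \<omega> i)\<bar> \<ge> r * \<epsilon>} \<le> 32 * exp (- (r\<^sup>2) / 32)" by blast
  }
  {
    fix i assume i: "i < K"
      and hi: "AE \<omega> in bandit_joint K P pol t. real (num_samples (snd \<omega>) i) \<ge> 1 / \<epsilon>\<^sup>2"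
    define q :: "nat \<Rightarrow> real" where "q = (\<lambda>j. if j = i then 1 else 0)"
    have sx: "(\<Sum>j<K. q j * x j) = x i" for x :: "nat \<Rightarrow> real"
      using i by (simp add: q_def if_distrib[of "\<lambda>c. c * _"] sum.delta cong: if_cong)
    have fx: "(\<lambda>\<omega>::((nat \<Rightarrow> real) \<times> history). \<Sum>j<K. q j * fst \<omega> j) = (\<lambda>\<omega>. fst \<omega> i)"
      by (simp add: sx)
    have m: "measure (bandit_post_model K P pol t)
           {\<omega> \<in> space (bandit_post_model K P pol t).
              \<bar>(\<Sum>j<K. q j * snd (snd \<omega>) j) - (\<Sum>j<K. q j * fst \<omega> j)\<bar> \<ge> r * \<epsilon>}
           \<le> 32 * exp (- (r\<^sup>2) / 32) \<and>
         measure (bandit_joint K P pol t)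
           {\<omega> \<in> space (bandit_joint K P pol t).
              \<bar>real_cond_exp (bandit_joint K P pol t) (hist_algebra K P pol t)
                   (\<lambda>\<omega>. \<Sum>j<K. q j * fst \<omega> j) \<omega>
                 - (\<Sum>j<K. q j * fst \<omega> j)\<bar> \<ge> r * \<epsilon>} \<le> 32 * exp (- (r\<^sup>2) / 32)"
      by (rule main) (use i hi in \<open>auto simp: q_def sum.delta\<close>)
    show "measure (bandit_post_model K P pol t)
           {\<omega> \<in> space (bandit_post_model K P pol t).
              \<bar>snd (snd \<omega>) i - fst \<omega> i\<bar> \<ge> r * \<epsilon>} \<le> 32 * exp (- (r\<^sup>2) / 32)"
      using m by (simp only: sx fx)
    show "measure (bandit_joint K P pol t)
           {\<omega> \<in> space (bandit_joint K P pol t).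
              \<bar>real_cond_exp (bandit_joint K P pol t) (hist_algebra K P pol t) (\<lambda>\<omega>. fst \<omega> i) \<omega>
                 - fst \<omega> i\<bar> \<ge> r * \<epsilon>} \<le> 32 * exp (- (r\<^sup>2) / 32)"
      using m by (simp only: sx fx)
  }
qed

end
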